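(* Let $(\mathcal{A},\mathscr{B})$ be a measurable space, $E$ the space of finite signed measures on it and $\mathcal{X}$ the set of probability measures on it. Let $\phi:[0,\infty)\to[0,\infty)$ satisfy $\phi(1)=1$ and admit a second order Taylor expansion around $1$, i.e. $\phi(1+y)=1+y\phi'(1)+\tfrac{y^2}{2}\phi''(1)+o(y^2)$ as $y\to 0$. Then both $V_\phi$ and $R_\phi$ are codivergences on $\mathcal{X}$ (in the sense defined in the context) with bilinear expansion domain $\mathcal{M}_{P_0}$ at each $P_0\in\mathcal{X}$ and with bilinear map $(\mu,\tilde\mu)\mapsto\phi'(1)^2\langle\mu,\tilde\mu\rangle_{P_0}$, where $$\langle\mu,\tilde\mu\rangle_{P_0}:=\int\frac{d\mu}{dP_0}\,d\tilde\mu=\int hg\,dP_0,\qquad h=\frac{d\mu}{dP_0},\ g=\frac{d\tilde\mu}{dP_0}.$$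
   Context: Definition (codivergence). Let $\mathcal{X}$ be a subset of a real vector space $E$ and $(E_u)_{u\in\mathcal{X}}$ a family of linear subspaces of $E$. A function $D:\mathcal{X}^3\to\mathbb{R}\cup\{+\infty\}$ is a codivergence on $\mathcal{X}$ with bilinear expansion domain $E_u$ at $u$ if for all $u,v,w\in\mathcal{X}$: (i) $D(u|v,w)=D(u|w,v)$; (ii) $D(u|v,v)\ge0$, with equality if $u=v$; (iii) there is a bilinear map $\langle\cdot,\cdot\rangle_u$ on $E_u$ such that for any $h,g\in E_u$ and all $(s,t)$ in some open neighborhood of $(0,0)$ (possibly depending on $h,g$) we have $u+th,u+sg\in\mathcal{X}$, $D(u|u+th,u+sg)<+\infty$ and $D(u|u+th,u+sg)=ts\langle h,g\rangle_u+o(t^2+s^2)$ as $(s,t)\to(0,0)$. $\mathcal{M}_{P_0}:=\{\mu\in E:\ \mu\ll P_0,\ \int d\mu=0,\ \operatorname{ess\,sup}_{P_0}|d\mu/dP_0|<\infty\}$. For probability measures $P_0,P_1,P_2$ with $P_1,P_2\ll P_0$: $$V_\phi(P_0|P_1,P_2):=\int\phi\Big(\frac{dP_1}{dP_0}\Big)\phi\Big(\frac{dP_2}{dP_0}\Big)dP_0-\int\phi\Big(\frac{dP_1}{dP_0}\Big)dP_0\int\phi\Big(\frac{dP_2}{dP_0}\Big)dP_0,$$ $$R_\phi(P_0|P_1,P_2):=\frac{\int\phi(\frac{dP_1}{dP_0})\phi(\frac{dP_2}{dP_0})dP_0}{\int\phi(\frac{dP_1}{dP_0})dP_0\int\phi(\frac{dP_2}{dP_0})dP_0}-1;$$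 if $P_1\not\ll P_0$ or $P_2\not\ll P_0$, both are defined to be $+\infty$. *)

theory Defs
  imports "HOL-Probability.Probability" "HOL-Library.Landau_Symbols"
begin

definition lin_subspace :: "('b \<Rightarrow> real) set \<Rightarrow> bool" where
  "lin_subspace S \<longleftrightarrow> (\<lambda>_. 0) \<in> S \<and> (\<forall>x\<in>S. \<forall>y\<in>S. (\<lambda>b. x b + y b) \<in> S)
     \<and> (\<forall>c::real. \<forall>x\<in>S. (\<lambda>b. c * x b) \<in> S)"

definition bilinear_on :: "('b \<Rightarrow> real) set \<Rightarrow> (('b \<Rightarrow> real) \<Rightarrow> ('b \<Rightarrow> real) \<Rightarrow> real) \<Rightarrow> bool" where
  "bilinear_on S B \<longleftrightarrow>
     (\<forall>x\<in>S. \<forall>y\<in>S. \<forall>z\<in>S. \<forall>a b::real.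
        B (\<lambda>w. a * x w + b * y w) z = a * B x z + b * B y z \<and>
        B z (\<lambda>w. a * x w + b * y w) = a * B z x + b * B z y)"

text \<open>Codivergence on X (subset of the linear space E), with bilinear expansion domain Eu u
  and bilinear map B u at u.  Values in ereal; the codomain is required to avoid -infinity.\<close>
definition codivergence ::
  "('b \<Rightarrow> real) set \<Rightarrow> ('b \<Rightarrow> real) set \<Rightarrow> (('b \<Rightarrow> real) \<Rightarrow> ('b \<Rightarrow> real) set)
   \<Rightarrow> (('b \<Rightarrow> real) \<Rightarrow> ('b \<Rightarrow> real) \<Rightarrow> ('b \<Rightarrow> real) \<Rightarrow> ereal)
   \<Rightarrow> (('b \<Rightarrow> real) \<Rightarrow> ('b \<Rightarrow> real) \<Rightarrow> ('b \<Rightarrow> real) \<Rightarrow> real) \<Rightarrow> bool" where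
  "codivergence E X Eu D B \<longleftrightarrow>
     lin_subspace E \<and> X \<subseteq> E \<and>
     (\<forall>u\<in>X. lin_subspace (Eu u) \<and> Eu u \<subseteq> E) \<and>
     (\<forall>u\<in>X. \<forall>v\<in>X. \<forall>w\<in>X. D u v w \<noteq> -\<infinity>) \<and>
     (\<forall>u\<in>X. \<forall>v\<in>X. \<forall>w\<in>X. D u v w = D u w v) \<and>
     (\<forall>u\<in>X. \<forall>v\<in>X. D u v v \<ge> 0) \<and>
     (\<forall>u\<in>X. D u u u = 0) \<and>
     (\<forall>u\<in>X. bilinear_on (Eu u) (B u) \<and>
        (\<forall>h\<in>Eu u. \<forall>g\<in>Eu u. \<exists>N. open N \<and> (0::real, 0::real) \<in> N \<and>
           (\<forall>(s,t)\<in>N. (\<lambda>b. u b + t * h b) \<in> X \<and> (\<lambda>b. u b + s * g b) \<in> X \<and>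
               D u (\<lambda>b. u b + t * h b) (\<lambda>b. u b + s * g b) < \<infinity>) \<and>
           (\<lambda>(s,t). real_of_ereal (D u (\<lambda>b. u b + t * h b) (\<lambda>b. u b + s * g b)) - t * s * B u h g)
             \<in> o[at (0,0)](\<lambda>(s,t). t\<^sup>2 + s\<^sup>2)))"

text \<open>Finite signed measures on the measurable space M, as real set functions vanishing off sets M.\<close>
definition fin_signed_measures :: "'a measure \<Rightarrow> ('a set \<Rightarrow> real) set" where
  "fin_signed_measures M = {\<mu>. (\<forall>A. A \<notin> sets M \<longrightarrow> \<mu> A = 0) \<and> \<mu> {} = 0 \<and>
      (\<forall>F::nat \<Rightarrow> 'a set. range F \<subseteq> sets M \<longrightarrow> disjoint_family F \<longrightarrow>
          (\<lambda>i. \<mu> (F i)) sums \<mu> (\<Union>i. F i))}"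

definition prob_measures :: "'a measure \<Rightarrow> ('a set \<Rightarrow> real) set" where
  "prob_measures M = {P \<in> fin_signed_measures M. (\<forall>A\<in>sets M. P A \<ge> 0) \<and> P (space M) = 1}"

definition to_meas :: "'a measure \<Rightarrow> ('a set \<Rightarrow> real) \<Rightarrow> 'a measure" where
  "to_meas M P = measure_of (space M) (sets M) (\<lambda>A. ennreal (P A))"

definition is_sdens :: "'a measure \<Rightarrow> ('a set \<Rightarrow> real) \<Rightarrow> ('a set \<Rightarrow> real) \<Rightarrow> ('a \<Rightarrow> real) \<Rightarrow> bool" where
  "is_sdens M P0 \<mu> h \<longleftrightarrow> h \<in> borel_measurable M \<and> integrable (to_meas M P0) h \<and>
     (\<forall>A\<in>sets M. \<mu> A = (\<integral>x\<in>A. h x \<partial>to_meas M P0))"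

definition M_P0 :: "'a measure \<Rightarrow> ('a set \<Rightarrow> real) \<Rightarrow> ('a set \<Rightarrow> real) set" where
  "M_P0 M P0 = {\<mu> \<in> fin_signed_measures M. \<mu> (space M) = 0 \<and>
      (\<exists>h. is_sdens M P0 \<mu> h \<and> esssup (to_meas M P0) (\<lambda>x. ereal \<bar>h x\<bar>) < \<infinity>)}"

definition sdens :: "'a measure \<Rightarrow> ('a set \<Rightarrow> real) \<Rightarrow> ('a set \<Rightarrow> real) \<Rightarrow> 'a \<Rightarrow> real" where
  "sdens M P0 \<mu> = (SOME h. is_sdens M P0 \<mu> h)"

definition inner_P0 :: "'a measure \<Rightarrow> ('a set \<Rightarrow> real) \<Rightarrow> ('a set \<Rightarrow> real) \<Rightarrow> ('a set \<Rightarrow> real) \<Rightarrow> real" where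
  "inner_P0 M P0 \<mu> \<nu> = (\<integral>x. sdens M P0 \<mu> x * sdens M P0 \<nu> x \<partial>to_meas M P0)"

definition phi_dens :: "'a measure \<Rightarrow> (real \<Rightarrow> real) \<Rightarrow> ('a set \<Rightarrow> real) \<Rightarrow> ('a set \<Rightarrow> real) \<Rightarrow> 'a \<Rightarrow> real" where
  "phi_dens M \<phi> P0 P x = \<phi> (enn2real (RN_deriv (to_meas M P0) (to_meas M P) x))"

text \<open>Convention: the value is +infinity unless P1, P2 << P0 and all integrals occurring are finite
  (for R also: the denominator is nonzero).\<close>
definition V_phi :: "'a measure \<Rightarrow> (real \<Rightarrow> real) \<Rightarrow> ('a set \<Rightarrow> real) \<Rightarrow> ('a set \<Rightarrow> real) \<Rightarrow> ('a set \<Rightarrow> real) \<Rightarrow> ereal" where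
  "V_phi M \<phi> P0 P1 P2 =
    (let N = to_meas M P0; f1 = phi_dens M \<phi> P0 P1; f2 = phi_dens M \<phi> P0 P2 in
     if absolutely_continuous N (to_meas M P1) \<and> absolutely_continuous N (to_meas M P2) \<and>
        integrable N f1 \<and> integrable N f2 \<and> integrable N (\<lambda>x. f1 x * f2 x)
     then ereal ((\<integral>x. f1 x * f2 x \<partial>N) - (\<integral>x. f1 x \<partial>N) * (\<integral>x. f2 x \<partial>N))
     else \<infinity>)"

definition R_phi :: "'a measure \<Rightarrow> (real \<Rightarrow> real) \<Rightarrow> ('a set \<Rightarrow> real) \<Rightarrow> ('a set \<Rightarrow> real) \<Rightarrow> ('a set \<Rightarrow> real) \<Rightarrow> ereal" where
  "R_phi M \<phi> P0 P1 P2 =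
    (let N = to_meas M P0; f1 = phi_dens M \<phi> P0 P1; f2 = phi_dens M \<phi> P0 P2 in
     if absolutely_continuous N (to_meas M P1) \<and> absolutely_continuous N (to_meas M P2) \<and>
        integrable N f1 \<and> integrable N f2 \<and> integrable N (\<lambda>x. f1 x * f2 x) \<and>
        (\<integral>x. f1 x \<partial>N) * (\<integral>x. f2 x \<partial>N) \<noteq> 0
     then ereal ((\<integral>x. f1 x * f2 x \<partial>N) / ((\<integral>x. f1 x \<partial>N) * (\<integral>x. f2 x \<partial>N)) - 1)
     else \<infinity>)"

end

theory Submission
  imports Defs
begin


lemma to_meas_sets: "sets (to_meas M P) = sets M"
  unfolding to_meas_def by (simp add: sets.space_closed sets.sigma_sets_eq)

lemma to_meas_space: "space (to_meas M P) = space M"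
  by (metis sets_eq_imp_space_eq to_meas_sets)

lemma fsm_sums: "\<mu> \<in> fin_signed_measures M \<Longrightarrow> range F \<subseteq> sets M \<Longrightarrow> disjoint_family F
  \<Longrightarrow> (\<lambda>i. \<mu> (F i)) sums \<mu> (\<Union>i. F i)"
  unfolding fin_signed_measures_def by blast

lemma to_meas_emeasure:
  assumes P: "P \<in> prob_measures M" and A: "A \<in> sets M"
  shows "emeasure (to_meas M P) A = ennreal (P A)"
  unfolding to_meas_def
proof (rule emeasure_measure_of_sigma[OF sets.sigma_algebra_axioms _ _ A])
  show "positive (sets M) (\<lambda>A. ennreal (P A))"
    using P unfolding positive_def prob_measures_def fin_signed_measures_def by simp
  show "countably_additive (sets M) (\<lambda>A. ennreal (P A))"
    unfolding countably_additive_def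
  proof (intro allI impI)
    fix F :: "nat \<Rightarrow> _" assume F: "range F \<subseteq> sets M" "disjoint_family F" "\<Union> (range F) \<in> sets M"
    have nn: "\<And>i. 0 \<le> P (F i)" using P F(1) unfolding prob_measures_def by auto
    have "(\<lambda>i. P (F i)) sums P (\<Union>i. F i)"
      using P F by (intro fsm_sums) (auto simp: prob_measures_def)
    moreover have "0 \<le> P (\<Union>i. F i)" using P F(3) unfolding prob_measures_def by auto
    ultimately have "(\<lambda>i. ennreal (P (F i))) sums ennreal (P (\<Union>i. F i))"
      using nn by simp
    then show "(\<Sum>i. ennreal (P (F i))) = ennreal (P (\<Union> (range F)))"
      by (simp add: sums_iff)
  qed
qed

lemma to_meas_prob:
  assumes P: "P \<in> prob_measures M"
  shows "prob_space (to_meas M P)"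
proof
  show "emeasure (to_meas M P) (space (to_meas M P)) = 1"
    using P by (simp add: to_meas_space to_meas_emeasure prob_measures_def)
qed

lemma to_meas_measure:
  assumes P: "P \<in> prob_measures M" and A: "A \<in> sets M"
  shows "measure (to_meas M P) A = P A"
  using P A by (simp add: measure_def to_meas_emeasure prob_measures_def)



lemma meas_to_meas: "measurable (to_meas M P) N = measurable M N"
  by (rule measurable_cong_sets[OF to_meas_sets refl])

lemma ess_bdd_D:
  assumes "esssup N (\<lambda>x. ereal \<bar>h x\<bar>) < \<infinity>"
  shows "\<exists>C\<ge>0. AE x in N. \<bar>h x\<bar> \<le> C"
proof -
  let ?e = "esssup N (\<lambda>x. ereal \<bar>h x\<bar>)"
  have ae: "AE x in N. ereal \<bar>h x\<bar> \<le> ?e" by (rule esssup_AE)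
  define C where "C = real_of_ereal (max 0 ?e)"
  have m0: "0 \<le> max 0 ?e" by (rule max.cobounded1)
  have m1: "max 0 ?e < \<infinity>" using assms by (simp add: max_def)
  have eqC: "max 0 ?e = ereal C" unfolding C_def
    using m0 m1 by (intro ereal_real'[symmetric]) auto
  have "AE x in N. \<bar>h x\<bar> \<le> C"
    using ae
  proof eventually_elim
    case (elim x)
    have "?e \<le> max 0 ?e" by (rule max.cobounded2)
    then have "?e \<le> ereal C" by (simp only: eqC)
    with elim have "ereal \<bar>h x\<bar> \<le> ereal C" by (rule order_trans)
    then show ?case by simp
  qed
  moreover have "C \<ge> 0" unfolding C_def by (simp add: real_of_ereal_pos)
  ultimately show ?thesis by blast
qed

lemma ess_bdd_I:
  assumes "h \<in> borel_measurable N" "AE x in N. \<bar>h x\<bar> \<le> C"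
  shows "esssup N (\<lambda>x. ereal \<bar>h x\<bar>) < \<infinity>"
proof -
  have "esssup N (\<lambda>x. ereal \<bar>h x\<bar>) \<le> ereal C"
    using assms by (intro esssup_I) auto
  moreover have "ereal C < \<infinity>" by simp
  ultimately show ?thesis by (rule le_less_trans)
qed

lemma set_int_of_int: "integrable N (h::_\<Rightarrow>real) \<Longrightarrow> A \<in> sets N \<Longrightarrow> set_integrable N A h"
  unfolding set_integrable_def using integrable_mult_indicator[of A N h] by simp
lemma sdens_unique:
  assumes "is_sdens M P0 \<mu> h" "is_sdens M P0 \<mu> k"
  shows "AE x in to_meas M P0. h x = k x"
proof (rule density_unique_real)
  show "integrable (to_meas M P0) h" "integrable (to_meas M P0) k"
    using assms unfolding is_sdens_def by blast+
  fix A assume "A \<in> sets (to_meas M P0)"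
  then have A: "A \<in> sets M" by (simp only: to_meas_sets)
  have "\<mu> A = (\<integral>x\<in>A. h x \<partial>to_meas M P0)" "\<mu> A = (\<integral>x\<in>A. k x \<partial>to_meas M P0)"
    using assms A unfolding is_sdens_def by blast+
  then show "(\<integral>x\<in>A. h x \<partial>to_meas M P0) = (\<integral>x\<in>A. k x \<partial>to_meas M P0)" by simp
qed

lemma M_P0_iff:
  "\<mu> \<in> M_P0 M P0 \<longleftrightarrow> \<mu> \<in> fin_signed_measures M \<and> \<mu> (space M) = 0 \<and>
     (\<exists>h C. is_sdens M P0 \<mu> h \<and> (AE x in to_meas M P0. \<bar>h x\<bar> \<le> C))"
proof -
  have "(\<exists>h. is_sdens M P0 \<mu> h \<and> esssup (to_meas M P0) (\<lambda>x. ereal \<bar>h x\<bar>) < \<infinity>)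
     \<longleftrightarrow> (\<exists>h C. is_sdens M P0 \<mu> h \<and> (AE x in to_meas M P0. \<bar>h x\<bar> \<le> C))"
  proof
    assume "\<exists>h. is_sdens M P0 \<mu> h \<and> esssup (to_meas M P0) (\<lambda>x. ereal \<bar>h x\<bar>) < \<infinity>"
    then show "\<exists>h C. is_sdens M P0 \<mu> h \<and> (AE x in to_meas M P0. \<bar>h x\<bar> \<le> C)"
      using ess_bdd_D by blast
  next
    assume "\<exists>h C. is_sdens M P0 \<mu> h \<and> (AE x in to_meas M P0. \<bar>h x\<bar> \<le> C)"
    then obtain h C where h: "is_sdens M P0 \<mu> h" "AE x in to_meas M P0. \<bar>h x\<bar> \<le> C" by blast
    have "h \<in> borel_measurable (to_meas M P0)" using h(1) unfolding is_sdens_def meas_to_meas by blast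
    then show "\<exists>h. is_sdens M P0 \<mu> h \<and> esssup (to_meas M P0) (\<lambda>x. ereal \<bar>h x\<bar>) < \<infinity>"
      using h ess_bdd_I by blast
  qed
  then show ?thesis unfolding M_P0_def by blast
qed

lemma sdens_props:
  assumes "\<mu> \<in> M_P0 M P0"
  shows "is_sdens M P0 \<mu> (sdens M P0 \<mu>)" "\<exists>C\<ge>0. AE x in to_meas M P0. \<bar>sdens M P0 \<mu> x\<bar> \<le> C"
proof -
  obtain h C where h: "is_sdens M P0 \<mu> h" "AE x in to_meas M P0. \<bar>h x\<bar> \<le> C"
    using assms unfolding M_P0_iff by blast
  show s: "is_sdens M P0 \<mu> (sdens M P0 \<mu>)" unfolding sdens_def by (rule someI[where P="is_sdens M P0 \<mu>"]) (rule h(1))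
  have "AE x in to_meas M P0. \<bar>sdens M P0 \<mu> x\<bar> \<le> max 0 C"
    using sdens_unique[OF h(1) s] h(2) by eventually_elim auto
  then show "\<exists>C\<ge>0. AE x in to_meas M P0. \<bar>sdens M P0 \<mu> x\<bar> \<le> C"
    by (intro exI[of _ "max 0 C"]) auto
qed

lemma fsm_lin: "lin_subspace (fin_signed_measures M)"
  unfolding lin_subspace_def fin_signed_measures_def
  by (auto intro!: sums_add sums_mult)

lemma is_sdens_lin:
  assumes "is_sdens M P0 \<mu> h" "is_sdens M P0 \<nu> k"
  shows "is_sdens M P0 (\<lambda>A. a * \<mu> A + b * \<nu> A) (\<lambda>x. a * h x + b * k x)"
proof -
  have i: "integrable (to_meas M P0) h" "integrable (to_meas M P0) k"
    "h \<in> borel_measurable M" "k \<in> borel_measurable M"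
    and e: "\<forall>A\<in>sets M. \<mu> A = (\<integral>x\<in>A. h x \<partial>to_meas M P0)" "\<forall>A\<in>sets M. \<nu> A = (\<integral>x\<in>A. k x \<partial>to_meas M P0)"
    using assms unfolding is_sdens_def by auto
  have "a * \<mu> A + b * \<nu> A = (\<integral>x\<in>A. a * h x + b * k x \<partial>to_meas M P0)" if A: "A \<in> sets M" for A
  proof -
    have si: "set_integrable (to_meas M P0) A (\<lambda>x. a * h x)" "set_integrable (to_meas M P0) A (\<lambda>x. b * k x)"
      using i A by (auto intro!: set_int_of_int simp: to_meas_sets)
    have "(\<integral>x\<in>A. a * h x + b * k x \<partial>to_meas M P0) = (\<integral>x\<in>A. a * h x \<partial>to_meas M P0) + (\<integral>x\<in>A. b * k x \<partial>to_meas M P0)"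
      by (rule set_integral_add(2)[OF si])
    also have "\<dots> = a * \<mu> A + b * \<nu> A" using e A by simp
    finally show ?thesis by simp
  qed
  moreover have "integrable (to_meas M P0) (\<lambda>x. a * h x + b * k x)" using i by simp
  moreover have "(\<lambda>x. a * h x + b * k x) \<in> borel_measurable M" using i by simp
  ultimately show ?thesis unfolding is_sdens_def by blast
qed

lemma is_sdens_zero: "is_sdens M P0 (\<lambda>_. 0) (\<lambda>_. 0)"
  unfolding is_sdens_def by auto

lemma M_P0_lin:
  assumes "\<mu> \<in> M_P0 M P0" "\<nu> \<in> M_P0 M P0"
  shows "(\<lambda>A. a * \<mu> A + b * \<nu> A) \<in> M_P0 M P0"
proof -
  obtain h C where h: "is_sdens M P0 \<mu> h" "AE x in to_meas M P0. \<bar>h x\<bar> \<le> C"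
    and m: "\<mu> \<in> fin_signed_measures M" "\<mu> (space M) = 0"
    using assms unfolding M_P0_iff by blast
  obtain k D where k: "is_sdens M P0 \<nu> k" "AE x in to_meas M P0. \<bar>k x\<bar> \<le> D"
    and n: "\<nu> \<in> fin_signed_measures M" "\<nu> (space M) = 0"
    using assms unfolding M_P0_iff by blast
  have fs: "(\<lambda>A. a * \<mu> A + b * \<nu> A) \<in> fin_signed_measures M"
    using fsm_lin[of M] m n unfolding lin_subspace_def by auto
  have ae: "AE x in to_meas M P0. \<bar>a * h x + b * k x\<bar> \<le> \<bar>a\<bar> * C + \<bar>b\<bar> * D"
    using h(2) k(2)
  proof eventually_elim
    case (elim x)
    have "\<bar>a * h x + b * k x\<bar> \<le> \<bar>a\<bar> * \<bar>h x\<bar> + \<bar>b\<bar> * \<bar>k x\<bar>"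
      by (metis abs_mult abs_triangle_ineq)
    also have "\<dots> \<le> \<bar>a\<bar> * C + \<bar>b\<bar> * D"
      using elim by (intro add_mono mult_left_mono) auto
    finally show ?case .
  qed
  have sp: "a * \<mu> (space M) + b * \<nu> (space M) = 0" using m n by simp
  show ?thesis unfolding M_P0_iff using fs ae is_sdens_lin[OF h(1) k(1)] sp by blast
qed

lemma M_P0_subspace: "lin_subspace (M_P0 M P0)"
proof -
  have z: "(\<lambda>_. 0) \<in> M_P0 M P0"
    unfolding M_P0_iff using is_sdens_zero fsm_lin[of M]
    by (auto simp: lin_subspace_def)
  show ?thesis unfolding lin_subspace_def
  proof (intro conjI ballI allI z)
    fix x y assume "x \<in> M_P0 M P0" "y \<in> M_P0 M P0"
    from M_P0_lin[OF this, of 1 1] show "(\<lambda>b. x b + y b) \<in> M_P0 M P0" by simp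
  next
    fix c x assume "x \<in> M_P0 M P0"
    from M_P0_lin[OF this z, of c 0] show "(\<lambda>b. c * x b) \<in> M_P0 M P0" by simp
  qed
qed



lemma sdens_meas: "\<mu> \<in> M_P0 M P0 \<Longrightarrow> sdens M P0 \<mu> \<in> borel_measurable (to_meas M P0)"
  using sdens_props(1) unfolding is_sdens_def meas_to_meas by blast

lemma sdens_int: "\<mu> \<in> M_P0 M P0 \<Longrightarrow> integrable (to_meas M P0) (sdens M P0 \<mu>)"
  using sdens_props(1) unfolding is_sdens_def by blast

lemma prod_int:
  assumes P0: "P0 \<in> prob_measures M" and m: "\<mu> \<in> M_P0 M P0" "\<nu> \<in> M_P0 M P0"
  shows "integrable (to_meas M P0) (\<lambda>x. sdens M P0 \<mu> x * sdens M P0 \<nu> x)"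
proof -
  interpret prob_space "to_meas M P0" by (rule to_meas_prob[OF P0])
  obtain C where C: "AE x in to_meas M P0. \<bar>sdens M P0 \<mu> x\<bar> \<le> C" using sdens_props(2)[OF m(1)] by blast
  obtain D where D: "AE x in to_meas M P0. \<bar>sdens M P0 \<nu> x\<bar> \<le> D" using sdens_props(2)[OF m(2)] by blast
  show ?thesis
  proof (rule integrable_const_bound)
    show "AE x in to_meas M P0. norm (sdens M P0 \<mu> x * sdens M P0 \<nu> x) \<le> C * D"
      using C D
    proof eventually_elim
      case (elim x)
      then show ?case unfolding real_norm_def abs_mult
        by (intro mult_mono) auto
    qed
    show "(\<lambda>x. sdens M P0 \<mu> x * sdens M P0 \<nu> x) \<in> borel_measurable (to_meas M P0)"
      using sdens_meas[OF m(1)] sdens_meas[OF m(2)] by simp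
  qed
qed

lemma sdens_lin_AE:
  assumes m: "\<mu> \<in> M_P0 M P0" "\<nu> \<in> M_P0 M P0"
  shows "AE x in to_meas M P0. sdens M P0 (\<lambda>A. a * \<mu> A + b * \<nu> A) x = a * sdens M P0 \<mu> x + b * sdens M P0 \<nu> x"
  using sdens_unique[OF sdens_props(1)[OF M_P0_lin[OF m]] is_sdens_lin[OF sdens_props(1)[OF m(1)] sdens_props(1)[OF m(2)]]] .

lemma inner_lin1:
  assumes P0: "P0 \<in> prob_measures M" and m: "\<mu> \<in> M_P0 M P0" "\<nu> \<in> M_P0 M P0" "z \<in> M_P0 M P0"
  shows "inner_P0 M P0 (\<lambda>A. a * \<mu> A + b * \<nu> A) z = a * inner_P0 M P0 \<mu> z + b * inner_P0 M P0 \<nu> z"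
proof -
  let ?N = "to_meas M P0"
  have "inner_P0 M P0 (\<lambda>A. a * \<mu> A + b * \<nu> A) z =
     (\<integral>x. a * (sdens M P0 \<mu> x * sdens M P0 z x) + b * (sdens M P0 \<nu> x * sdens M P0 z x) \<partial>?N)"
    unfolding inner_P0_def
  proof (rule integral_cong_AE)
    show "(\<lambda>x. sdens M P0 (\<lambda>A. a * \<mu> A + b * \<nu> A) x * sdens M P0 z x) \<in> borel_measurable ?N"
      using sdens_meas[OF M_P0_lin[OF m(1,2)]] sdens_meas[OF m(3)] by simp
    show "(\<lambda>x. a * (sdens M P0 \<mu> x * sdens M P0 z x) + b * (sdens M P0 \<nu> x * sdens M P0 z x)) \<in> borel_measurable ?N"
      using sdens_meas[OF m(1)] sdens_meas[OF m(2)] sdens_meas[OF m(3)] by simp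
    show "AE x in ?N. sdens M P0 (\<lambda>A. a * \<mu> A + b * \<nu> A) x * sdens M P0 z x =
        a * (sdens M P0 \<mu> x * sdens M P0 z x) + b * (sdens M P0 \<nu> x * sdens M P0 z x)"
      using sdens_lin_AE[OF m(1,2), of a b] by eventually_elim (simp add: algebra_simps)
  qed
  also have "\<dots> = a * inner_P0 M P0 \<mu> z + b * inner_P0 M P0 \<nu> z"
    unfolding inner_P0_def using prod_int[OF P0 m(1,3)] prod_int[OF P0 m(2,3)] by simp
  finally show ?thesis .
qed

lemma inner_sym: "inner_P0 M P0 \<mu> \<nu> = inner_P0 M P0 \<nu> \<mu>"
  unfolding inner_P0_def by (simp add: mult.commute)

lemma bilin:
  assumes P0: "P0 \<in> prob_measures M"
  shows "bilinear_on (M_P0 M P0) (\<lambda>\<mu> \<nu>. d * inner_P0 M P0 \<mu> \<nu>)"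
  unfolding bilinear_on_def
proof (intro ballI allI conjI)
  fix x y z a b assume m: "x \<in> M_P0 M P0" "y \<in> M_P0 M P0" "z \<in> M_P0 M P0"
  show "d * inner_P0 M P0 (\<lambda>w. a * x w + b * y w) z = a * (d * inner_P0 M P0 x z) + b * (d * inner_P0 M P0 y z)"
    using inner_lin1[OF P0 m] by (simp add: algebra_simps)
  show "d * inner_P0 M P0 z (\<lambda>w. a * x w + b * y w) = a * (d * inner_P0 M P0 z x) + b * (d * inner_P0 M P0 z y)"
    using inner_lin1[OF P0 m] by (simp add: algebra_simps inner_sym[of M P0 z])
qed



lemma phi_dens_meas:
  assumes phi: "\<phi> \<in> borel_measurable (restrict_space borel {0..})"
  shows "phi_dens M \<phi> P0 P \<in> borel_measurable (to_meas M P0)"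
proof -
  let ?g = "\<lambda>x. enn2real (RN_deriv (to_meas M P0) (to_meas M P) x)"
  have "?g \<in> borel_measurable (to_meas M P0)" by measurable
  then have "?g \<in> measurable (to_meas M P0) (restrict_space borel {0..})"
    by (intro measurable_restrict_space2) auto
  from measurable_comp[OF this phi] show ?thesis
    unfolding phi_dens_def comp_def .
qed

lemma V_not_minf: "V_phi M \<phi> P0 P1 P2 \<noteq> -\<infinity>"
  unfolding V_phi_def Let_def by simp

lemma R_not_minf: "R_phi M \<phi> P0 P1 P2 \<noteq> -\<infinity>"
  unfolding R_phi_def Let_def by simp

lemma V_sym: "V_phi M \<phi> P0 P1 P2 = V_phi M \<phi> P0 P2 P1"
  unfolding V_phi_def Let_def by (simp add: mult.commute conj_ac)

lemma R_sym: "R_phi M \<phi> P0 P1 P2 = R_phi M \<phi> P0 P2 P1"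
  unfolding R_phi_def Let_def by (simp add: mult.commute conj_ac)

lemma sq_int_le:
  fixes f :: "'a \<Rightarrow> real"
  assumes "prob_space N" "integrable N f" "integrable N (\<lambda>x. f x * f x)"
  shows "(\<integral>x. f x \<partial>N) * (\<integral>x. f x \<partial>N) \<le> (\<integral>x. f x * f x \<partial>N)"
proof -
  interpret prob_space N by fact
  have "0 \<le> variance f" by (rule variance_positive)
  also have "variance f = expectation (\<lambda>x. (f x)\<^sup>2) - (expectation f)\<^sup>2"
    using assms by (intro variance_eq) (auto simp: power2_eq_square)
  finally show ?thesis by (simp add: power2_eq_square)
qed

lemma V_nonneg: "P0 \<in> prob_measures M \<Longrightarrow> V_phi M \<phi> P0 P P \<ge> 0"
  unfolding V_phi_def Let_def
  using sq_int_le[OF to_meas_prob, of P0 M "phi_dens M \<phi> P0 P"] by auto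

lemma R_nonneg: "P0 \<in> prob_measures M \<Longrightarrow> R_phi M \<phi> P0 P P \<ge> 0"
proof -
  assume P0: "P0 \<in> prob_measures M"
  let ?f = "phi_dens M \<phi> P0 P" and ?N = "to_meas M P0"
  { assume i: "integrable ?N ?f" "integrable ?N (\<lambda>x. ?f x * ?f x)"
      and nz: "(\<integral>x. ?f x \<partial>?N) * (\<integral>x. ?f x \<partial>?N) \<noteq> 0"
    have le: "(\<integral>x. ?f x \<partial>?N) * (\<integral>x. ?f x \<partial>?N) \<le> (\<integral>x. ?f x * ?f x \<partial>?N)"
      by (rule sq_int_le[OF to_meas_prob[OF P0] i])
    have "(\<integral>x. ?f x \<partial>?N) \<noteq> 0" using nz by auto
    then have pos: "(\<integral>x. ?f x \<partial>?N) * (\<integral>x. ?f x \<partial>?N) > 0"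
      using not_real_square_gt_zero by blast
    have "1 \<le> (\<integral>x. ?f x * ?f x \<partial>?N) / ((\<integral>x. ?f x \<partial>?N) * (\<integral>x. ?f x \<partial>?N))"
      using le pos by simp
    then have "0 \<le> (\<integral>x. ?f x * ?f x \<partial>?N) / ((\<integral>x. ?f x \<partial>?N) * (\<integral>x. ?f x \<partial>?N)) - 1" by simp }
  then show ?thesis unfolding R_phi_def Let_def by auto
qed

lemma diag_AE:
  assumes P0: "P0 \<in> prob_measures M" and phi1: "\<phi> 1 = 1"
  shows "AE x in to_meas M P0. phi_dens M \<phi> P0 P0 x = 1"
proof -
  interpret prob_space "to_meas M P0" by (rule to_meas_prob[OF P0])
  have "AE x in to_meas M P0. 1 = RN_deriv (to_meas M P0) (to_meas M P0) x"
    by (rule RN_deriv_unique) (auto simp: density_1)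
  then show ?thesis
  proof eventually_elim
    case (elim x)
    then have "RN_deriv (to_meas M P0) (to_meas M P0) x = 1" by simp
    then show ?case by (simp add: phi_dens_def phi1)
  qed
qed

lemma diag_facts:
  assumes P0: "P0 \<in> prob_measures M" and phi1: "\<phi> 1 = 1"
    and phi: "\<phi> \<in> borel_measurable (restrict_space borel {0..})"
  shows "integrable (to_meas M P0) (phi_dens M \<phi> P0 P0)"
    "integrable (to_meas M P0) (\<lambda>x. phi_dens M \<phi> P0 P0 x * phi_dens M \<phi> P0 P0 x)"
    "(\<integral>x. phi_dens M \<phi> P0 P0 x \<partial>to_meas M P0) = 1"
    "(\<integral>x. phi_dens M \<phi> P0 P0 x * phi_dens M \<phi> P0 P0 x \<partial>to_meas M P0) = 1"
proof -
  interpret prob_space "to_meas M P0" by (rule to_meas_prob[OF P0])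
  note ae = diag_AE[where \<phi>=\<phi>, OF P0 phi1]
  note m = phi_dens_meas[OF phi, of M P0 P0]
  have ae2: "AE x in to_meas M P0. phi_dens M \<phi> P0 P0 x * phi_dens M \<phi> P0 P0 x = 1"
    using ae by eventually_elim simp
  have m2: "(\<lambda>x. phi_dens M \<phi> P0 P0 x * phi_dens M \<phi> P0 P0 x) \<in> borel_measurable (to_meas M P0)"
    using m by simp
  show "integrable (to_meas M P0) (phi_dens M \<phi> P0 P0)"
    using integrable_cong_AE[OF m _ ae] by simp
  show "integrable (to_meas M P0) (\<lambda>x. phi_dens M \<phi> P0 P0 x * phi_dens M \<phi> P0 P0 x)"
    using integrable_cong_AE[OF m2 _ ae2] by simp
  show "(\<integral>x. phi_dens M \<phi> P0 P0 x \<partial>to_meas M P0) = 1"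
    using integral_cong_AE[OF m _ ae] by (simp add: prob_space)
  show "(\<integral>x. phi_dens M \<phi> P0 P0 x * phi_dens M \<phi> P0 P0 x \<partial>to_meas M P0) = 1"
    using integral_cong_AE[OF m2 _ ae2] by (simp add: prob_space)
qed

lemma ac_refl: "absolutely_continuous N N"
  unfolding absolutely_continuous_def by simp

lemma V_diag:
  assumes "P0 \<in> prob_measures M" "\<phi> 1 = 1" "\<phi> \<in> borel_measurable (restrict_space borel {0..})"
  shows "V_phi M \<phi> P0 P0 P0 = 0"
  using diag_facts[OF assms] unfolding V_phi_def Let_def by (simp add: ac_refl)

lemma R_diag:
  assumes "P0 \<in> prob_measures M" "\<phi> 1 = 1" "\<phi> \<in> borel_measurable (restrict_space borel {0..})"
  shows "R_phi M \<phi> P0 P0 P0 = 0"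
  using diag_facts[OF assms] unfolding R_phi_def Let_def by (simp add: ac_refl)



lemma pert_int:
  assumes P0: "P0 \<in> prob_measures M" and h: "is_sdens M P0 \<mu> h" and A: "A \<in> sets M"
  shows "P0 A + t * \<mu> A = (\<integral>x. indicator A x * (1 + t * h x) \<partial>to_meas M P0)"
proof -
  let ?N = "to_meas M P0"
  interpret prob_space ?N by (rule to_meas_prob[OF P0])
  have ih: "integrable ?N h" and mu: "\<mu> A = (\<integral>x\<in>A. h x \<partial>?N)" using h A unfolding is_sdens_def by auto
  have A': "A \<in> sets ?N" using A by (simp add: to_meas_sets)
  have i1: "integrable ?N (\<lambda>x. indicator A x * h x)"
    using integrable_mult_indicator[OF A' ih] by simp
  have i2: "integrable ?N (indicator A :: _ \<Rightarrow> real)"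
    using A' by (intro integrable_const_bound[where B=1]) (auto simp: indicator_def)
  have "(\<integral>x. indicator A x * (1 + t * h x) \<partial>?N) = (\<integral>x. indicator A x + t * (indicator A x * h x) \<partial>?N)"
    by (simp add: algebra_simps)
  also have "\<dots> = (\<integral>x. indicator A x \<partial>?N) + t * (\<integral>x. indicator A x * h x \<partial>?N)"
    using i1 i2 by simp
  also have "(\<integral>x. indicator A x \<partial>?N) = P0 A"
    using A' sets.sets_into_space[OF A'] to_meas_measure[OF P0 A]
    by (simp add: Int_absorb2)
  also have "(\<integral>x. indicator A x * h x \<partial>?N) = \<mu> A"
    unfolding mu set_lebesgue_integral_def by simp
  finally show ?thesis by simp
qed

lemma pert_facts:
  assumes P0: "P0 \<in> prob_measures M" and m: "\<mu> \<in> M_P0 M P0" and h: "is_sdens M P0 \<mu> h"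
    and C: "AE x in to_meas M P0. \<bar>h x\<bar> \<le> C" and t: "\<bar>t\<bar> * C \<le> 1"
  shows "(\<lambda>A. P0 A + t * \<mu> A) \<in> prob_measures M"
    "to_meas M (\<lambda>A. P0 A + t * \<mu> A) = density (to_meas M P0) (\<lambda>x. ennreal (1 + t * h x))"
    "absolutely_continuous (to_meas M P0) (to_meas M (\<lambda>A. P0 A + t * \<mu> A))"
    "AE x in to_meas M P0. enn2real (RN_deriv (to_meas M P0) (to_meas M (\<lambda>A. P0 A + t * \<mu> A)) x) = 1 + t * h x"
proof -
  let ?N = "to_meas M P0" and ?P = "\<lambda>A. P0 A + t * \<mu> A"
  interpret prob_space ?N by (rule to_meas_prob[OF P0])
  have hm: "h \<in> borel_measurable ?N" and ih: "integrable ?N h"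
    using h unfolding is_sdens_def meas_to_meas by auto
  have nn: "AE x in ?N. 0 \<le> 1 + t * h x"
    using C
  proof eventually_elim
    case (elim x)
    have "\<bar>t * h x\<bar> \<le> \<bar>t\<bar> * C" unfolding abs_mult by (intro mult_left_mono elim) auto
    then show ?case using t by linarith
  qed
  have P0f: "P0 \<in> fin_signed_measures M" "P0 (space M) = 1" using P0 unfolding prob_measures_def by auto
  have mf: "\<mu> \<in> fin_signed_measures M" "\<mu> (space M) = 0" using m unfolding M_P0_def by auto
  have tm: "(\<lambda>b. t * \<mu> b) \<in> fin_signed_measures M" using fsm_lin[of M] mf unfolding lin_subspace_def by blast
  have add: "\<And>x y. x \<in> fin_signed_measures M \<Longrightarrow> y \<in> fin_signed_measures M \<Longrightarrow> (\<lambda>b. x b + y b) \<in> fin_signed_measures M"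
    using fsm_lin[of M] unfolding lin_subspace_def by blast
  have Pf: "?P \<in> fin_signed_measures M" using add[OF P0f(1) tm] by simp
  have Pint: "?P A = (\<integral>x. indicator A x * (1 + t * h x) \<partial>?N)" if "A \<in> sets M" for A
    using pert_int[OF P0 h that] .
  have ig: "integrable ?N (\<lambda>x. indicator A x * (1 + t * h x))" if "A \<in> sets M" for A
  proof -
    have "integrable ?N (\<lambda>x. 1 + t * h x)" using ih by simp
    from integrable_mult_indicator[OF _ this, of A] that show ?thesis by (simp add: to_meas_sets)
  qed
  have Ppos: "?P A \<ge> 0" if "A \<in> sets M" for A
    unfolding Pint[OF that] using nn
    by (intro integral_nonneg_AE) (auto elim!: eventually_mono simp: indicator_def)
  show Pp: "?P \<in> prob_measures M"
    unfolding prob_measures_def using Pf Ppos P0f mf by auto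
  show dens: "to_meas M ?P = density ?N (\<lambda>x. ennreal (1 + t * h x))"
  proof (rule measure_eqI)
    show "sets (to_meas M ?P) = sets (density ?N (\<lambda>x. ennreal (1 + t * h x)))"
      by (simp add: to_meas_sets)
    fix A assume "A \<in> sets (to_meas M ?P)"
    then have A: "A \<in> sets M" by (simp add: to_meas_sets)
    then have A': "A \<in> sets ?N" by (simp add: to_meas_sets)
    have "emeasure (density ?N (\<lambda>x. ennreal (1 + t * h x))) A =
        (\<integral>\<^sup>+x. ennreal (1 + t * h x) * indicator A x \<partial>?N)"
      using hm A' by (intro emeasure_density) auto
    also have "\<dots> = (\<integral>\<^sup>+x. ennreal (indicator A x * (1 + t * h x)) \<partial>?N)"
      using nn by (intro nn_integral_cong_AE) (auto elim!: eventually_mono simp: indicator_def)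
    also have "\<dots> = ennreal (\<integral>x. indicator A x * (1 + t * h x) \<partial>?N)"
      using nn ig[OF A] by (intro nn_integral_eq_integral) (auto elim!: eventually_mono simp: indicator_def)
    also have "\<dots> = emeasure (to_meas M ?P) A"
      using to_meas_emeasure[OF Pp A] Pint[OF A] by simp
    finally show "emeasure (to_meas M ?P) A = emeasure (density ?N (\<lambda>x. ennreal (1 + t * h x))) A" by simp
  qed
  show "absolutely_continuous ?N (to_meas M ?P)"
    unfolding dens using hm by (intro absolutely_continuousI_density) auto
  have "AE x in ?N. ennreal (1 + t * h x) = RN_deriv ?N (to_meas M ?P) x"
    using hm by (intro RN_deriv_unique) (auto simp: dens)
  then show "AE x in ?N. enn2real (RN_deriv ?N (to_meas M ?P) x) = 1 + t * h x"
    using nn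
  proof eventually_elim
    case (elim x)
    then show ?case by (metis enn2real_ennreal)
  qed
qed



lemma abs_int_le:
  fixes f :: "'a \<Rightarrow> real"
  assumes "prob_space N" "integrable N f" "AE x in N. \<bar>f x\<bar> \<le> B"
  shows "\<bar>\<integral>x. f x \<partial>N\<bar> \<le> B"
proof -
  interpret prob_space N by fact
  have "\<bar>\<integral>x. f x \<partial>N\<bar> \<le> (\<integral>x. \<bar>f x\<bar> \<partial>N)" by (rule integral_abs_bound)
  also have "\<dots> \<le> (\<integral>x. B \<partial>N)"
    using assms by (intro integral_mono_AE) auto
  also have "\<dots> = B" by (simp add: prob_space)
  finally show ?thesis .
qed

lemma bdd_int:
  fixes f :: "'a \<Rightarrow> real"
  assumes "prob_space N" "f \<in> borel_measurable N" "AE x in N. \<bar>f x\<bar> \<le> B"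
  shows "integrable N f"
proof -
  interpret prob_space N by fact
  show ?thesis using assms(2,3) by (intro integrable_const_bound[where B=B]) auto
qed

lemma AE_mult_bd:
  fixes f g :: "'a \<Rightarrow> real"
  assumes "AE x in N. \<bar>f x\<bar> \<le> A" "AE x in N. \<bar>g x\<bar> \<le> B"
  shows "AE x in N. \<bar>f x * g x\<bar> \<le> A * B"
  using assms
proof eventually_elim
  case (elim x)
  then show ?case unfolding abs_mult by (intro mult_mono) auto
qed

lemma core:
  fixes h g p q :: "'a \<Rightarrow> real"
  assumes N: "prob_space N"
    and m: "h \<in> borel_measurable N" "g \<in> borel_measurable N" "p \<in> borel_measurable N" "q \<in> borel_measurable N"
    and bh: "AE x in N. \<bar>h x\<bar> \<le> C" and bg: "AE x in N. \<bar>g x\<bar> \<le> C"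
    and bp: "AE x in N. \<bar>p x\<bar> \<le> P" and bq: "AE x in N. \<bar>q x\<bar> \<le> Q"
    and h0: "(\<integral>x. h x \<partial>N) = 0" and g0: "(\<integral>x. g x \<partial>N) = 0"
  shows "integrable N (\<lambda>x. 1 + a * h x + p x)" "integrable N (\<lambda>x. 1 + b * g x + q x)"
    "integrable N (\<lambda>x. (1 + a * h x + p x) * (1 + b * g x + q x))"
    "\<bar>(\<integral>x. 1 + a * h x + p x \<partial>N) - 1\<bar> \<le> P"
    "\<bar>(\<integral>x. 1 + b * g x + q x \<partial>N) - 1\<bar> \<le> Q"
    "\<bar>(\<integral>x. (1 + a * h x + p x) * (1 + b * g x + q x) \<partial>N)
       - (\<integral>x. 1 + a * h x + p x \<partial>N) * (\<integral>x. 1 + b * g x + q x \<partial>N)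
       - a * b * (\<integral>x. h x * g x \<partial>N)\<bar> \<le> \<bar>a\<bar> * C * Q + \<bar>b\<bar> * C * P + 2 * (P * Q)"
proof -
  interpret prob_space N by fact
  have ih: "integrable N h" using bdd_int[OF N m(1) bh] .
  have ig: "integrable N g" using bdd_int[OF N m(2) bg] .
  have ip: "integrable N p" using bdd_int[OF N m(3) bp] .
  have iq: "integrable N q" using bdd_int[OF N m(4) bq] .
  have ihg: "integrable N (\<lambda>x. h x * g x)" using bdd_int[OF N _ AE_mult_bd[OF bh bg]] m by simp
  have ihq: "integrable N (\<lambda>x. h x * q x)" using bdd_int[OF N _ AE_mult_bd[OF bh bq]] m by simp
  have ipg: "integrable N (\<lambda>x. p x * g x)" using bdd_int[OF N _ AE_mult_bd[OF bp bg]] m by simp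
  have ipq: "integrable N (\<lambda>x. p x * q x)" using bdd_int[OF N _ AE_mult_bd[OF bp bq]] m by simp
  note ints = ih ig ip iq ihg ihq ipg ipq
  show "integrable N (\<lambda>x. 1 + a * h x + p x)" "integrable N (\<lambda>x. 1 + b * g x + q x)"
    using ints by auto
  have eq: "(\<lambda>x. (1 + a * h x + p x) * (1 + b * g x + q x)) =
     (\<lambda>x. 1 + a * h x + p x + b * g x + q x + (a * b) * (h x * g x) + a * (h x * q x) + b * (p x * g x) + p x * q x)"
    by (auto simp: algebra_simps)
  show "integrable N (\<lambda>x. (1 + a * h x + p x) * (1 + b * g x + q x))"
    unfolding eq using ints by auto
  have eF: "(\<integral>x. 1 + a * h x + p x \<partial>N) = 1 + (\<integral>x. p x \<partial>N)"
    using ints h0 by (simp add: prob_space)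
  have eG: "(\<integral>x. 1 + b * g x + q x \<partial>N) = 1 + (\<integral>x. q x \<partial>N)"
    using ints g0 by (simp add: prob_space)
  have eFG: "(\<integral>x. (1 + a * h x + p x) * (1 + b * g x + q x) \<partial>N) =
     1 + (\<integral>x. p x \<partial>N) + (\<integral>x. q x \<partial>N) + (a * b) * (\<integral>x. h x * g x \<partial>N)
       + a * (\<integral>x. h x * q x \<partial>N) + b * (\<integral>x. p x * g x \<partial>N) + (\<integral>x. p x * q x \<partial>N)"
    unfolding eq using ints h0 g0 by (simp add: prob_space)
  have up: "\<bar>\<integral>x. p x \<partial>N\<bar> \<le> P" by (rule abs_int_le[OF N ip bp])
  have uq: "\<bar>\<integral>x. q x \<partial>N\<bar> \<le> Q" by (rule abs_int_le[OF N iq bq])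
  have uhq: "\<bar>\<integral>x. h x * q x \<partial>N\<bar> \<le> C * Q" by (rule abs_int_le[OF N ihq AE_mult_bd[OF bh bq]])
  have upg: "\<bar>\<integral>x. p x * g x \<partial>N\<bar> \<le> P * C" by (rule abs_int_le[OF N ipg AE_mult_bd[OF bp bg]])
  have upq: "\<bar>\<integral>x. p x * q x \<partial>N\<bar> \<le> P * Q" by (rule abs_int_le[OF N ipq AE_mult_bd[OF bp bq]])
  show "\<bar>(\<integral>x. 1 + a * h x + p x \<partial>N) - 1\<bar> \<le> P" using eF up by simp
  show "\<bar>(\<integral>x. 1 + b * g x + q x \<partial>N) - 1\<bar> \<le> Q" using eG uq by simp
  define u where "u = (\<integral>x. p x \<partial>N)"
  define v where "v = (\<integral>x. q x \<partial>N)"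
  define w1 where "w1 = (\<integral>x. h x * q x \<partial>N)"
  define w2 where "w2 = (\<integral>x. p x * g x \<partial>N)"
  define w3 where "w3 = (\<integral>x. p x * q x \<partial>N)"
  have "(\<integral>x. (1 + a * h x + p x) * (1 + b * g x + q x) \<partial>N)
       - (\<integral>x. 1 + a * h x + p x \<partial>N) * (\<integral>x. 1 + b * g x + q x \<partial>N)
       - a * b * (\<integral>x. h x * g x \<partial>N) = a * w1 + b * w2 + w3 - u * v"
    unfolding eFG eF eG u_def[symmetric] v_def[symmetric] w1_def[symmetric] w2_def[symmetric] w3_def[symmetric]
    by (simp add: algebra_simps)
  also have "\<bar>\<dots>\<bar> \<le> \<bar>a\<bar> * \<bar>w1\<bar> + \<bar>b\<bar> * \<bar>w2\<bar> + \<bar>w3\<bar> + \<bar>u\<bar> * \<bar>v\<bar>"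
    by (simp add: abs_mult[symmetric])
  also have "\<dots> \<le> \<bar>a\<bar> * (C * Q) + \<bar>b\<bar> * (P * C) + P * Q + P * Q"
    using uhq upg upq up uq unfolding u_def v_def w1_def w2_def w3_def
    by (intro add_mono mult_left_mono mult_mono) auto
  finally show "\<bar>(\<integral>x. (1 + a * h x + p x) * (1 + b * g x + q x) \<partial>N)
       - (\<integral>x. 1 + a * h x + p x \<partial>N) * (\<integral>x. 1 + b * g x + q x \<partial>N)
       - a * b * (\<integral>x. h x * g x \<partial>N)\<bar> \<le> \<bar>a\<bar> * C * Q + \<bar>b\<bar> * C * P + 2 * (P * Q)"
    by (simp add: algebra_simps)
qed



lemma f1: fixes s t :: real shows "\<bar>t\<bar> * s\<^sup>2 \<le> (\<bar>s\<bar> + \<bar>t\<bar>) * (t\<^sup>2 + s\<^sup>2)"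
proof -
  have "\<bar>t\<bar> * s\<^sup>2 \<le> \<bar>t\<bar> * (t\<^sup>2 + s\<^sup>2)" by (intro mult_left_mono) auto
  also have "\<dots> \<le> (\<bar>s\<bar> + \<bar>t\<bar>) * (t\<^sup>2 + s\<^sup>2)" by (intro mult_right_mono) auto
  finally show ?thesis .
qed

lemma f2: fixes s t :: real shows "\<bar>s\<bar> * t\<^sup>2 \<le> (\<bar>s\<bar> + \<bar>t\<bar>) * (t\<^sup>2 + s\<^sup>2)"
proof -
  have "\<bar>s\<bar> * t\<^sup>2 \<le> \<bar>s\<bar> * (t\<^sup>2 + s\<^sup>2)" by (intro mult_left_mono) auto
  also have "\<dots> \<le> (\<bar>s\<bar> + \<bar>t\<bar>) * (t\<^sup>2 + s\<^sup>2)" by (intro mult_right_mono) auto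
  finally show ?thesis .
qed

lemma sq_le_abs: fixes t :: real assumes "\<bar>t\<bar> \<le> 1" shows "t\<^sup>2 \<le> \<bar>t\<bar>"
  using assms by (simp add: power2_eq_square abs_le_square_iff)
    (metis abs_ge_zero abs_mult_self_eq mult_left_le_one_le)

lemma f3: fixes s t :: real assumes "\<bar>t\<bar> \<le> 1" shows "t\<^sup>2 * s\<^sup>2 \<le> (\<bar>s\<bar> + \<bar>t\<bar>) * (t\<^sup>2 + s\<^sup>2)"
proof -
  have "t\<^sup>2 * s\<^sup>2 \<le> \<bar>t\<bar> * s\<^sup>2" using sq_le_abs[OF assms] by (intro mult_right_mono) auto
  also have "\<dots> \<le> (\<bar>s\<bar> + \<bar>t\<bar>) * (t\<^sup>2 + s\<^sup>2)" by (rule f1)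
  finally show ?thesis .
qed

lemma f4: fixes s t :: real assumes "\<bar>t\<bar> \<le> 1" shows "\<bar>t\<bar> * \<bar>s\<bar> * t\<^sup>2 \<le> (\<bar>s\<bar> + \<bar>t\<bar>) * (t\<^sup>2 + s\<^sup>2)"
proof -
  have "\<bar>t\<bar> * \<bar>s\<bar> * t\<^sup>2 \<le> 1 * \<bar>s\<bar> * t\<^sup>2" using assms by (intro mult_right_mono) auto
  also have "\<dots> \<le> (\<bar>s\<bar> + \<bar>t\<bar>) * (t\<^sup>2 + s\<^sup>2)" using f2[of s t] by simp
  finally show ?thesis .
qed

lemma V_poly:
  fixes s t d1 C K E :: real
  assumes "0 \<le> C" "0 \<le> K" "\<bar>s\<bar> \<le> 1" "\<bar>t\<bar> \<le> 1"
    and E: "E \<le> \<bar>d1 * t\<bar> * C * (K * C\<^sup>2 * s\<^sup>2) + \<bar>d1 * s\<bar> * C * (K * C\<^sup>2 * t\<^sup>2) + 2 * ((K * C\<^sup>2 * t\<^sup>2) * (K * C\<^sup>2 * s\<^sup>2))"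
  shows "E \<le> (2 * (\<bar>d1\<bar> * C^3 * K) + 2 * (K\<^sup>2 * C^4)) * ((\<bar>s\<bar> + \<bar>t\<bar>) * (t\<^sup>2 + s\<^sup>2))"
proof -
  let ?r = "(\<bar>s\<bar> + \<bar>t\<bar>) * (t\<^sup>2 + s\<^sup>2)"
  have c1: "0 \<le> \<bar>d1\<bar> * C^3 * K" and c2: "0 \<le> K\<^sup>2 * C^4" using assms by auto
  have e1: "\<bar>d1 * t\<bar> * C * (K * C\<^sup>2 * s\<^sup>2) = (\<bar>d1\<bar> * C^3 * K) * (\<bar>t\<bar> * s\<^sup>2)"
    by (simp add: abs_mult power2_eq_square power3_eq_cube)
  have e2: "\<bar>d1 * s\<bar> * C * (K * C\<^sup>2 * t\<^sup>2) = (\<bar>d1\<bar> * C^3 * K) * (\<bar>s\<bar> * t\<^sup>2)"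
    by (simp add: abs_mult power2_eq_square power3_eq_cube)
  have e3: "(K * C\<^sup>2 * t\<^sup>2) * (K * C\<^sup>2 * s\<^sup>2) = (K\<^sup>2 * C^4) * (t\<^sup>2 * s\<^sup>2)"
    by (simp add: power2_eq_square eval_nat_numeral)
  have b1: "(\<bar>d1\<bar> * C^3 * K) * (\<bar>t\<bar> * s\<^sup>2) \<le> (\<bar>d1\<bar> * C^3 * K) * ?r"
    by (intro mult_left_mono f1 c1)
  have b2: "(\<bar>d1\<bar> * C^3 * K) * (\<bar>s\<bar> * t\<^sup>2) \<le> (\<bar>d1\<bar> * C^3 * K) * ?r"
    by (intro mult_left_mono f2 c1)
  have b3: "(K\<^sup>2 * C^4) * (t\<^sup>2 * s\<^sup>2) \<le> (K\<^sup>2 * C^4) * ?r"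
    by (intro mult_left_mono f3 c2 assms)
  show ?thesis using E b1 b2 b3 unfolding e1 e2 e3 by (simp add: algebra_simps)
qed

lemma gen: "(Y::real) \<noteq> 0 \<Longrightarrow> FG / Y - 1 - z = ((FG - Y - z) + z * (1 - Y)) / Y"
proof -
  assume Y: "Y \<noteq> 0"
  have e: "(FG - Y - z) + z * (1 - Y) = FG - Y * (1 + z)" by (simp add: algebra_simps)
  have "((FG - Y - z) + z * (1 - Y)) / Y = (FG - Y * (1 + z)) / Y" by (simp only: e)
  also have "\<dots> = FG / Y - (Y * (1 + z)) / Y" by (rule diff_divide_distrib)
  also have "(Y * (1 + z)) / Y = 1 + z" using Y by simp
  finally show ?thesis by (simp add: algebra_simps)
qed

lemma R_alg:
  fixes FG uF uG z E Z P Q :: real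
  assumes "\<bar>uF - 1\<bar> \<le> P" "\<bar>uG - 1\<bar> \<le> Q" "P \<le> 1/2" "Q \<le> 1/2"
    "\<bar>FG - uF * uG - z\<bar> \<le> E" "\<bar>z\<bar> \<le> Z"
  shows "uF * uG \<noteq> 0" "\<bar>FG / (uF * uG) - 1 - z\<bar> \<le> 4 * (E + Z * (2 * (P + Q)))"
proof -
  have F: "1/2 \<le> uF" "uF \<le> 3/2" and G: "1/2 \<le> uG" "uG \<le> 3/2" using assms by auto
  have "1/2 * (1/2) \<le> uF * uG" by (rule mult_mono) (use F G in auto)
  then have X: "1/4 \<le> uF * uG" by simp
  then show "uF * uG \<noteq> 0" by auto
  have X1: "\<bar>uF * uG - 1\<bar> \<le> 2 * (P + Q)"
  proof -
    have "uF * uG - 1 = (uF - 1) * uG + (uG - 1)" by (simp add: algebra_simps)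
    then have "\<bar>uF * uG - 1\<bar> \<le> \<bar>uF - 1\<bar> * \<bar>uG\<bar> + \<bar>uG - 1\<bar>" by (metis abs_mult abs_triangle_ineq)
    also have "\<dots> \<le> P * 2 + Q" using assms G by (intro add_mono mult_mono) auto
    moreover have "0 \<le> P" "0 \<le> Q" using assms(1,2) abs_ge_zero[of "uF - 1"] abs_ge_zero[of "uG - 1"] by linarith+
    ultimately have "\<bar>uF * uG - 1\<bar> \<le> 2 * P + 2 * Q" by linarith
    then show ?thesis by (simp add: algebra_simps)
  qed
  have "FG / (uF * uG) - 1 - z = ((FG - uF * uG - z) + z * (1 - uF * uG)) / (uF * uG)"
    using X by (intro gen) auto
  also have "\<bar>\<dots>\<bar> = \<bar>(FG - uF * uG - z) + z * (1 - uF * uG)\<bar> / (uF * uG)"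
    using X unfolding abs_divide by (subgoal_tac "\<bar>uF * uG\<bar> = uF * uG") auto
  also have "\<dots> \<le> (E + Z * (2 * (P + Q))) / (1/4)"
  proof (rule frac_le)
    have "\<bar>(FG - uF * uG - z) + z * (1 - uF * uG)\<bar> \<le> \<bar>FG - uF * uG - z\<bar> + \<bar>z\<bar> * \<bar>uF * uG - 1\<bar>"
      by (metis abs_minus_commute abs_mult abs_triangle_ineq)
    also have "\<dots> \<le> E + Z * (2 * (P + Q))" using assms X1 by (intro add_mono mult_mono) auto
    finally show "\<bar>(FG - uF * uG - z) + z * (1 - uF * uG)\<bar> \<le> E + Z * (2 * (P + Q))" .
    show "0 \<le> E + Z * (2 * (P + Q))" using assms by (smt (verit) abs_ge_zero mult_nonneg_nonneg)
  qed (use X in auto)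
  finally show "\<bar>FG / (uF * uG) - 1 - z\<bar> \<le> 4 * (E + Z * (2 * (P + Q)))" by simp
qed

lemma o_crit:
  fixes f :: "real \<times> real \<Rightarrow> real"
  assumes "0 < \<delta>" "\<And>s t. \<bar>s\<bar> < \<delta> \<Longrightarrow> \<bar>t\<bar> < \<delta> \<Longrightarrow> \<bar>f (s, t)\<bar> \<le> A * ((\<bar>s\<bar> + \<bar>t\<bar>) * (t\<^sup>2 + s\<^sup>2))"
  shows "f \<in> o[at (0,0)](\<lambda>(s,t). t\<^sup>2 + s\<^sup>2)"
proof (rule landau_o.smallI)
  fix c :: real assume c: "0 < c"
  define A' where "A' = max A 0"
  define d where "d = min \<delta> (c / (2 * (A' + 1)))"
  have d: "0 < d" using assms c unfolding d_def A'_def by auto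
  show "\<forall>\<^sub>F x in at (0, 0). norm (f x) \<le> c * norm (case x of (s, t) \<Rightarrow> t\<^sup>2 + s\<^sup>2)"
  proof (rule eventually_at[THEN iffD2], intro exI[of _ d] conjI d ballI impI)
    fix x :: "real \<times> real" assume x: "x \<noteq> (0, 0) \<and> dist x (0, 0) < d"
    obtain s t where st: "x = (s, t)" by (cases x)
    have ns: "\<bar>s\<bar> < d" and nt: "\<bar>t\<bar> < d"
      using x norm_fst_le[of s t] norm_snd_le[of t s] unfolding st by (auto simp: dist_norm)
    have "\<bar>f (s, t)\<bar> \<le> A * ((\<bar>s\<bar> + \<bar>t\<bar>) * (t\<^sup>2 + s\<^sup>2))"
      using ns nt d_def by (intro assms(2)) auto
    also have "\<dots> \<le> A' * ((\<bar>s\<bar> + \<bar>t\<bar>) * (t\<^sup>2 + s\<^sup>2))"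
      unfolding A'_def by (intro mult_right_mono) auto
    also have "\<dots> \<le> A' * (2 * d * (t\<^sup>2 + s\<^sup>2))"
      using ns nt unfolding A'_def by (intro mult_left_mono mult_right_mono) auto
    also have "\<dots> = (2 * A' * d) * (t\<^sup>2 + s\<^sup>2)" by simp
    also have "\<dots> \<le> c * (t\<^sup>2 + s\<^sup>2)"
    proof (intro mult_right_mono)
      have "2 * A' * d \<le> 2 * (A' + 1) * (c / (2 * (A' + 1)))"
        using assms(1) c unfolding d_def A'_def by (intro mult_mono) auto
      also have "\<dots> = c" unfolding A'_def by simp
      finally show "2 * A' * d \<le> c" .
    qed auto
    finally show "norm (f x) \<le> c * norm (case x of (s, t) \<Rightarrow> t\<^sup>2 + s\<^sup>2)"
      unfolding st by simp
  qed
qed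

lemma taylor_bd:
  fixes \<phi> :: "real \<Rightarrow> real"
  assumes "\<phi> 1 = 1" "(\<lambda>y. \<phi> (1 + y) - 1 - y * d1 - y\<^sup>2 / 2 * d2) \<in> o[at 0](\<lambda>y. y\<^sup>2)"
  shows "\<exists>\<delta>>0. \<forall>y. \<bar>y\<bar> < \<delta> \<longrightarrow> \<bar>\<phi> (1 + y) - 1 - d1 * y\<bar> \<le> (\<bar>d2\<bar> / 2 + 1) * y\<^sup>2"
proof -
  have "\<forall>\<^sub>F y in at 0. norm (\<phi> (1 + y) - 1 - y * d1 - y\<^sup>2 / 2 * d2) \<le> 1 * norm (y\<^sup>2)"
    using landau_o.smallD[OF assms(2), of 1] by simp
  then obtain \<delta> where d: "\<delta> > 0" and H: "\<And>y. y \<noteq> 0 \<Longrightarrow> dist y 0 < \<delta> \<Longrightarrow>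
      norm (\<phi> (1 + y) - 1 - y * d1 - y\<^sup>2 / 2 * d2) \<le> 1 * norm (y\<^sup>2)"
    unfolding eventually_at by auto
  show ?thesis
  proof (intro exI[of _ \<delta>] conjI d allI impI)
    fix y :: real assume y: "\<bar>y\<bar> < \<delta>"
    show "\<bar>\<phi> (1 + y) - 1 - d1 * y\<bar> \<le> (\<bar>d2\<bar> / 2 + 1) * y\<^sup>2"
    proof (cases "y = 0")
      case True then show ?thesis using assms(1) by simp
    next
      case False
      have r: "\<bar>\<phi> (1 + y) - 1 - y * d1 - y\<^sup>2 / 2 * d2\<bar> \<le> y\<^sup>2" using H[OF False] y by simp
      have "\<bar>y\<^sup>2 / 2 * d2\<bar> = \<bar>d2\<bar> / 2 * y\<^sup>2" by (simp add: abs_mult)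
      then show ?thesis using r by (simp add: algebra_simps)
    qed
  qed
qed



lemma small_t:
  fixes C K d0 t :: real
  assumes C: "0 \<le> C" and K: "0 \<le> K" and d0: "0 < d0"
    and t: "\<bar>t\<bar> < min (1 / (C + 1)) (min (d0 / (C + 1)) (1 / (2 * (K + 1) * (C + 1)\<^sup>2)))"
  shows "\<bar>t\<bar> * C \<le> 1" "\<bar>t\<bar> * C < d0" "\<bar>t\<bar> \<le> 1" "K * C\<^sup>2 * t\<^sup>2 \<le> 1/2"
proof -
  have C1: "0 < C + 1" using C by simp
  have t1: "\<bar>t\<bar> * (C + 1) < 1" using t C1 by (simp add: less_divide_eq)
  have t2: "\<bar>t\<bar> * (C + 1) < d0" using t C1 by (simp add: less_divide_eq)
  have KC: "0 < 2 * (K + 1) * (C + 1)\<^sup>2" using K C1 by simp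
  have t3: "\<bar>t\<bar> * (2 * (K + 1) * (C + 1)\<^sup>2) < 1" using t KC by (simp add: less_divide_eq)
  have "\<bar>t\<bar> * C \<le> \<bar>t\<bar> * (C + 1)" by (intro mult_left_mono) auto
  then show "\<bar>t\<bar> * C \<le> 1" "\<bar>t\<bar> * C < d0" using t1 t2 by linarith+
  have "\<bar>t\<bar> \<le> \<bar>t\<bar> * (C + 1)" using C by (simp add: algebra_simps)
  then show t4: "\<bar>t\<bar> \<le> 1" using t1 by linarith
  have "t\<^sup>2 \<le> \<bar>t\<bar>" by (rule sq_le_abs[OF t4])
  have "K * C\<^sup>2 \<le> (K + 1) * (C + 1)\<^sup>2"
    using K C by (intro mult_mono power_mono) auto
  have "K * C\<^sup>2 * t\<^sup>2 \<le> ((K + 1) * (C + 1)\<^sup>2) * \<bar>t\<bar>"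
    by (rule mult_mono[OF \<open>K * C\<^sup>2 \<le> (K + 1) * (C + 1)\<^sup>2\<close> \<open>t\<^sup>2 \<le> \<bar>t\<bar>\<close>]) (use K C in auto)
  also have "\<dots> \<le> 1/2" using t3 by (simp add: algebra_simps)
  finally show "K * C\<^sup>2 * t\<^sup>2 \<le> 1/2" .
qed

lemma dens_zero:
  assumes P0: "P0 \<in> prob_measures M" and m: "\<mu> \<in> M_P0 M P0"
  shows "(\<integral>x. sdens M P0 \<mu> x \<partial>to_meas M P0) = 0"
proof -
  have s: "is_sdens M P0 \<mu> (sdens M P0 \<mu>)" by (rule sdens_props(1)[OF m])
  have "0 = \<mu> (space M)" using m unfolding M_P0_def by auto
  also have "\<dots> = (\<integral>x\<in>space (to_meas M P0). sdens M P0 \<mu> x \<partial>to_meas M P0)"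
    using s unfolding is_sdens_def by (simp add: to_meas_space)
  also have "\<dots> = (\<integral>x. sdens M P0 \<mu> x \<partial>to_meas M P0)"
    using s unfolding is_sdens_def by (intro set_integral_space) auto
  finally show ?thesis by simp
qed

lemma p_bound:
  fixes \<phi> :: "real \<Rightarrow> real"
  assumes tay: "\<forall>y. \<bar>y\<bar> < d0 \<longrightarrow> \<bar>\<phi> (1 + y) - 1 - d1 * y\<bar> \<le> K * y\<^sup>2" and K: "0 \<le> K"
    and hC: "AE x in N. \<bar>h x\<bar> \<le> C" and t: "\<bar>t\<bar> * C < d0"
    and F: "AE x in N. F x = \<phi> (1 + t * h x)"
  shows "AE x in N. \<bar>F x - 1 - (d1 * t) * h x\<bar> \<le> K * C\<^sup>2 * t\<^sup>2"
  using hC F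
proof eventually_elim
  case (elim x)
  have a: "\<bar>t * h x\<bar> \<le> \<bar>t\<bar> * C" unfolding abs_mult by (intro mult_left_mono elim) auto
  then have "\<bar>t * h x\<bar> < d0" using t by linarith
  then have "\<bar>\<phi> (1 + t * h x) - 1 - d1 * (t * h x)\<bar> \<le> K * (t * h x)\<^sup>2" using tay by blast
  also have "(t * h x)\<^sup>2 \<le> (\<bar>t\<bar> * C)\<^sup>2"
    using a by (metis abs_ge_zero power2_abs power_mono)
  then have "K * (t * h x)\<^sup>2 \<le> K * (\<bar>t\<bar> * C)\<^sup>2" using K by (intro mult_left_mono)
  finally show ?case using elim(2) by (simp add: power_mult_distrib algebra_simps)
qed



lemma exp_common:
  fixes \<phi> :: "real \<Rightarrow> real"
  assumes P0: "P0 \<in> prob_measures M" and m: "\<mu> \<in> M_P0 M P0" "\<nu> \<in> M_P0 M P0"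
    and phi: "\<phi> \<in> borel_measurable (restrict_space borel {0..})"
    and tay: "\<forall>y. \<bar>y\<bar> < d0 \<longrightarrow> \<bar>\<phi> (1 + y) - 1 - d1 * y\<bar> \<le> K * y\<^sup>2" and K: "0 \<le> K"
    and C: "0 \<le> C" "AE x in to_meas M P0. \<bar>sdens M P0 \<mu> x\<bar> \<le> C" "AE x in to_meas M P0. \<bar>sdens M P0 \<nu> x\<bar> \<le> C"
    and st: "\<bar>t\<bar> * C \<le> 1" "\<bar>s\<bar> * C \<le> 1" "\<bar>t\<bar> * C < d0" "\<bar>s\<bar> * C < d0"
  defines "F \<equiv> phi_dens M \<phi> P0 (\<lambda>A. P0 A + t * \<mu> A)"
    and "G \<equiv> phi_dens M \<phi> P0 (\<lambda>A. P0 A + s * \<nu> A)"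
    and "N \<equiv> to_meas M P0"
  shows "(\<lambda>A. P0 A + t * \<mu> A) \<in> prob_measures M" "(\<lambda>A. P0 A + s * \<nu> A) \<in> prob_measures M"
    "absolutely_continuous N (to_meas M (\<lambda>A. P0 A + t * \<mu> A))"
    "absolutely_continuous N (to_meas M (\<lambda>A. P0 A + s * \<nu> A))"
    "integrable N F" "integrable N G" "integrable N (\<lambda>x. F x * G x)"
    "\<bar>(\<integral>x. F x \<partial>N) - 1\<bar> \<le> K * C\<^sup>2 * t\<^sup>2" "\<bar>(\<integral>x. G x \<partial>N) - 1\<bar> \<le> K * C\<^sup>2 * s\<^sup>2"
    "\<bar>(\<integral>x. F x * G x \<partial>N) - (\<integral>x. F x \<partial>N) * (\<integral>x. G x \<partial>N) - (d1 * t) * (d1 * s) * inner_P0 M P0 \<mu> \<nu>\<bar>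
       \<le> \<bar>d1 * t\<bar> * C * (K * C\<^sup>2 * s\<^sup>2) + \<bar>d1 * s\<bar> * C * (K * C\<^sup>2 * t\<^sup>2) + 2 * ((K * C\<^sup>2 * t\<^sup>2) * (K * C\<^sup>2 * s\<^sup>2))"
    "\<bar>inner_P0 M P0 \<mu> \<nu>\<bar> \<le> C * C"
proof -
  let ?h = "sdens M P0 \<mu>" and ?g = "sdens M P0 \<nu>"
  have Np: "prob_space N" unfolding N_def by (rule to_meas_prob[OF P0])
  note pt = pert_facts[OF P0 m(1) sdens_props(1)[OF m(1)] C(2) st(1)]
  note ps = pert_facts[OF P0 m(2) sdens_props(1)[OF m(2)] C(3) st(2)]
  show "(\<lambda>A. P0 A + t * \<mu> A) \<in> prob_measures M" "(\<lambda>A. P0 A + s * \<nu> A) \<in> prob_measures M"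
    "absolutely_continuous N (to_meas M (\<lambda>A. P0 A + t * \<mu> A))"
    "absolutely_continuous N (to_meas M (\<lambda>A. P0 A + s * \<nu> A))"
    using pt ps unfolding N_def by auto
  have Fae: "AE x in N. F x = \<phi> (1 + t * ?h x)"
    using pt(4) unfolding F_def N_def phi_dens_def by eventually_elim simp
  have Gae: "AE x in N. G x = \<phi> (1 + s * ?g x)"
    using ps(4) unfolding G_def N_def phi_dens_def by eventually_elim simp
  define p where "p x = F x - 1 - (d1 * t) * ?h x" for x
  define q where "q x = G x - 1 - (d1 * s) * ?g x" for x
  have bp: "AE x in N. \<bar>p x\<bar> \<le> K * C\<^sup>2 * t\<^sup>2"
    unfolding p_def by (rule p_bound[OF tay K C(2)[folded N_def] st(3) Fae])
  have bq: "AE x in N. \<bar>q x\<bar> \<le> K * C\<^sup>2 * s\<^sup>2"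
    unfolding q_def by (rule p_bound[OF tay K C(3)[folded N_def] st(4) Gae])
  have Feq: "F = (\<lambda>x. 1 + (d1 * t) * ?h x + p x)" unfolding p_def by auto
  have Geq: "G = (\<lambda>x. 1 + (d1 * s) * ?g x + q x)" unfolding q_def by auto
  have mh: "?h \<in> borel_measurable N" and mg: "?g \<in> borel_measurable N"
    unfolding N_def using sdens_meas m by auto
  have mF: "F \<in> borel_measurable N" and mG: "G \<in> borel_measurable N"
    unfolding F_def G_def N_def using phi_dens_meas[OF phi] by auto
  have mp: "p \<in> borel_measurable N" unfolding p_def using mF mh by simp
  have mq: "q \<in> borel_measurable N" unfolding q_def using mG mg by simp
  note cr1 = core(1)[where a="d1 * t", OF Np mh mg mp mq C(2)[folded N_def] C(3)[folded N_def] bp bq dens_zero[OF P0 m(1), folded N_def] dens_zero[OF P0 m(2), folded N_def]]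
  note cr2 = core(2)[where b="d1 * s", OF Np mh mg mp mq C(2)[folded N_def] C(3)[folded N_def] bp bq dens_zero[OF P0 m(1), folded N_def] dens_zero[OF P0 m(2), folded N_def]]
  note cr3 = core(3)[where a="d1 * t" and b="d1 * s", OF Np mh mg mp mq C(2)[folded N_def] C(3)[folded N_def] bp bq dens_zero[OF P0 m(1), folded N_def] dens_zero[OF P0 m(2), folded N_def]]
  note cr4 = core(4)[where a="d1 * t", OF Np mh mg mp mq C(2)[folded N_def] C(3)[folded N_def] bp bq dens_zero[OF P0 m(1), folded N_def] dens_zero[OF P0 m(2), folded N_def]]
  note cr5 = core(5)[where b="d1 * s", OF Np mh mg mp mq C(2)[folded N_def] C(3)[folded N_def] bp bq dens_zero[OF P0 m(1), folded N_def] dens_zero[OF P0 m(2), folded N_def]]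
  note cr6 = core(6)[where a="d1 * t" and b="d1 * s", OF Np mh mg mp mq C(2)[folded N_def] C(3)[folded N_def] bp bq dens_zero[OF P0 m(1), folded N_def] dens_zero[OF P0 m(2), folded N_def]]
  show "integrable N F" "integrable N G" "integrable N (\<lambda>x. F x * G x)"
    "\<bar>(\<integral>x. F x \<partial>N) - 1\<bar> \<le> K * C\<^sup>2 * t\<^sup>2" "\<bar>(\<integral>x. G x \<partial>N) - 1\<bar> \<le> K * C\<^sup>2 * s\<^sup>2"
    using cr1 cr2 cr3 cr4 cr5 unfolding Feq Geq by auto
  have inn: "inner_P0 M P0 \<mu> \<nu> = (\<integral>x. ?h x * ?g x \<partial>N)" unfolding inner_P0_def N_def ..
  show "\<bar>(\<integral>x. F x * G x \<partial>N) - (\<integral>x. F x \<partial>N) * (\<integral>x. G x \<partial>N) - (d1 * t) * (d1 * s) * inner_P0 M P0 \<mu> \<nu>\<bar>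
       \<le> \<bar>d1 * t\<bar> * C * (K * C\<^sup>2 * s\<^sup>2) + \<bar>d1 * s\<bar> * C * (K * C\<^sup>2 * t\<^sup>2) + 2 * ((K * C\<^sup>2 * t\<^sup>2) * (K * C\<^sup>2 * s\<^sup>2))"
    using cr6 unfolding Feq Geq inn by simp
  show "\<bar>inner_P0 M P0 \<mu> \<nu>\<bar> \<le> C * C"
    unfolding inn using abs_int_le[OF Np prod_int[OF P0 m, folded N_def] AE_mult_bd[OF C(2) C(3), folded N_def]] .
qed



lemma setup_consts:
  fixes \<phi> :: "real \<Rightarrow> real"
  assumes P0: "P0 \<in> prob_measures M" and m: "\<mu> \<in> M_P0 M P0" "\<nu> \<in> M_P0 M P0"
    and phi1: "\<phi> 1 = 1"
    and o: "(\<lambda>y. \<phi> (1 + y) - 1 - y * d1 - y\<^sup>2 / 2 * d2) \<in> o[at 0](\<lambda>y. y\<^sup>2)"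
  obtains d0 K C where "0 < d0" "0 \<le> K" "0 \<le> C"
    "\<forall>y. \<bar>y\<bar> < d0 \<longrightarrow> \<bar>\<phi> (1 + y) - 1 - d1 * y\<bar> \<le> K * y\<^sup>2"
    "AE x in to_meas M P0. \<bar>sdens M P0 \<mu> x\<bar> \<le> C" "AE x in to_meas M P0. \<bar>sdens M P0 \<nu> x\<bar> \<le> C"
proof -
  obtain d0 where d0: "d0 > 0" "\<forall>y. \<bar>y\<bar> < d0 \<longrightarrow> \<bar>\<phi> (1 + y) - 1 - d1 * y\<bar> \<le> (\<bar>d2\<bar> / 2 + 1) * y\<^sup>2"
    using taylor_bd[OF phi1 o] by blast
  obtain C1 where C1: "C1 \<ge> 0" "AE x in to_meas M P0. \<bar>sdens M P0 \<mu> x\<bar> \<le> C1" using sdens_props(2)[OF m(1)] by blast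
  obtain C2 where C2: "C2 \<ge> 0" "AE x in to_meas M P0. \<bar>sdens M P0 \<nu> x\<bar> \<le> C2" using sdens_props(2)[OF m(2)] by blast
  have "AE x in to_meas M P0. \<bar>sdens M P0 \<mu> x\<bar> \<le> max C1 C2" using C1(2) by eventually_elim auto
  moreover have "AE x in to_meas M P0. \<bar>sdens M P0 \<nu> x\<bar> \<le> max C1 C2" using C2(2) by eventually_elim auto
  moreover have "0 \<le> \<bar>d2\<bar> / 2 + 1" by simp
  moreover have "0 \<le> max C1 C2" using C1 by simp
  ultimately show ?thesis using that d0 by blast
qed

lemma ball_small:
  assumes "(s, t) \<in> ball (0::real, 0::real) d"
  shows "\<bar>s\<bar> < d" "\<bar>t\<bar> < d"
proof -
  have "dist (0, 0) (s, t) = norm (s, t)" by (simp add: dist_norm norm_Pair)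
  then show "\<bar>s\<bar> < d" "\<bar>t\<bar> < d"
    using assms norm_fst_le[of s t] norm_snd_le[of t s] by (auto simp: mem_ball)
qed

lemma V_exp:
  fixes \<phi> :: "real \<Rightarrow> real"
  assumes P0: "P0 \<in> prob_measures M" and m: "\<mu> \<in> M_P0 M P0" "\<nu> \<in> M_P0 M P0"
    and phi: "\<phi> \<in> borel_measurable (restrict_space borel {0..})" and phi1: "\<phi> 1 = 1"
    and o: "(\<lambda>y. \<phi> (1 + y) - 1 - y * d1 - y\<^sup>2 / 2 * d2) \<in> o[at 0](\<lambda>y. y\<^sup>2)"
  shows "\<exists>N. open N \<and> (0::real, 0::real) \<in> N \<and>
           (\<forall>(s,t)\<in>N. (\<lambda>b. P0 b + t * \<mu> b) \<in> prob_measures M \<and> (\<lambda>b. P0 b + s * \<nu> b) \<in> prob_measures M \<and>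
               V_phi M \<phi> P0 (\<lambda>b. P0 b + t * \<mu> b) (\<lambda>b. P0 b + s * \<nu> b) < \<infinity>) \<and>
           (\<lambda>(s,t). real_of_ereal (V_phi M \<phi> P0 (\<lambda>b. P0 b + t * \<mu> b) (\<lambda>b. P0 b + s * \<nu> b)) - t * s * (d1\<^sup>2 * inner_P0 M P0 \<mu> \<nu>))
             \<in> o[at (0,0)](\<lambda>(s,t). t\<^sup>2 + s\<^sup>2)"
proof -
  obtain d0 K C where c: "0 < d0" "0 \<le> K" "0 \<le> C"
    "\<forall>y. \<bar>y\<bar> < d0 \<longrightarrow> \<bar>\<phi> (1 + y) - 1 - d1 * y\<bar> \<le> K * y\<^sup>2"
    "AE x in to_meas M P0. \<bar>sdens M P0 \<mu> x\<bar> \<le> C" "AE x in to_meas M P0. \<bar>sdens M P0 \<nu> x\<bar> \<le> C"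
    using setup_consts[OF P0 m phi1 o] by blast
  define \<delta> where "\<delta> = min (1 / (C + 1)) (min (d0 / (C + 1)) (1 / (2 * (K + 1) * (C + 1)\<^sup>2)))"
  have \<delta>: "0 < \<delta>" unfolding \<delta>_def using c by auto
  define A where "A = 2 * (\<bar>d1\<bar> * C^3 * K) + 2 * (K\<^sup>2 * C^4)"
  have main: "(\<lambda>b. P0 b + t * \<mu> b) \<in> prob_measures M \<and> (\<lambda>b. P0 b + s * \<nu> b) \<in> prob_measures M \<and>
      V_phi M \<phi> P0 (\<lambda>b. P0 b + t * \<mu> b) (\<lambda>b. P0 b + s * \<nu> b) < \<infinity> \<and>
      \<bar>real_of_ereal (V_phi M \<phi> P0 (\<lambda>b. P0 b + t * \<mu> b) (\<lambda>b. P0 b + s * \<nu> b)) - t * s * (d1\<^sup>2 * inner_P0 M P0 \<mu> \<nu>)\<bar>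
        \<le> A * ((\<bar>s\<bar> + \<bar>t\<bar>) * (t\<^sup>2 + s\<^sup>2))"
    if st: "\<bar>s\<bar> < \<delta>" "\<bar>t\<bar> < \<delta>" for s t
  proof -
    note ts = small_t[OF c(3) c(2) c(1) st(2)[unfolded \<delta>_def]]
    note ss = small_t[OF c(3) c(2) c(1) st(1)[unfolded \<delta>_def]]
    note E = exp_common[OF P0 m phi c(4) c(2) c(3) c(5) c(6) ts(1) ss(1) ts(2) ss(2)]
    let ?N = "to_meas M P0"
    let ?F = "phi_dens M \<phi> P0 (\<lambda>A. P0 A + t * \<mu> A)" and ?G = "phi_dens M \<phi> P0 (\<lambda>A. P0 A + s * \<nu> A)"
    have V: "V_phi M \<phi> P0 (\<lambda>b. P0 b + t * \<mu> b) (\<lambda>b. P0 b + s * \<nu> b) =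
        ereal ((\<integral>x. ?F x * ?G x \<partial>?N) - (\<integral>x. ?F x \<partial>?N) * (\<integral>x. ?G x \<partial>?N))"
      unfolding V_phi_def Let_def using E(3-7) by simp
    have eq: "(d1 * t) * (d1 * s) * inner_P0 M P0 \<mu> \<nu> = t * s * (d1\<^sup>2 * inner_P0 M P0 \<mu> \<nu>)"
      by (simp add: power2_eq_square algebra_simps)
    have "\<bar>(\<integral>x. ?F x * ?G x \<partial>?N) - (\<integral>x. ?F x \<partial>?N) * (\<integral>x. ?G x \<partial>?N) - t * s * (d1\<^sup>2 * inner_P0 M P0 \<mu> \<nu>)\<bar>
        \<le> A * ((\<bar>s\<bar> + \<bar>t\<bar>) * (t\<^sup>2 + s\<^sup>2))"
      unfolding A_def by (rule V_poly[OF c(3) c(2) ss(3) ts(3) E(10)[unfolded eq]])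
    then show ?thesis using E(1,2) V by simp
  qed
  show ?thesis
  proof (intro exI[of _ "ball (0,0) \<delta>"] conjI)
    show "open (ball (0::real, 0::real) \<delta>)" by simp
    show "(0::real, 0::real) \<in> ball (0, 0) \<delta>" using \<delta> by simp
    show "\<forall>(s, t)\<in>ball (0, 0) \<delta>. (\<lambda>b. P0 b + t * \<mu> b) \<in> prob_measures M \<and> (\<lambda>b. P0 b + s * \<nu> b) \<in> prob_measures M \<and>
               V_phi M \<phi> P0 (\<lambda>b. P0 b + t * \<mu> b) (\<lambda>b. P0 b + s * \<nu> b) < \<infinity>"
      using main ball_small by blast
    show "(\<lambda>(s,t). real_of_ereal (V_phi M \<phi> P0 (\<lambda>b. P0 b + t * \<mu> b) (\<lambda>b. P0 b + s * \<nu> b)) - t * s * (d1\<^sup>2 * inner_P0 M P0 \<mu> \<nu>))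
             \<in> o[at (0,0)](\<lambda>(s,t). t\<^sup>2 + s\<^sup>2)"
      by (rule o_crit[where A=A, OF \<delta>]) (use main in simp)
  qed
qed



lemma f5: fixes s t :: real assumes "\<bar>s\<bar> \<le> 1" shows "\<bar>t\<bar> * \<bar>s\<bar> * s\<^sup>2 \<le> (\<bar>s\<bar> + \<bar>t\<bar>) * (t\<^sup>2 + s\<^sup>2)"
proof -
  have "\<bar>t\<bar> * \<bar>s\<bar> * s\<^sup>2 \<le> \<bar>t\<bar> * 1 * s\<^sup>2" using assms by (intro mult_right_mono mult_left_mono) auto
  also have "\<dots> \<le> (\<bar>s\<bar> + \<bar>t\<bar>) * (t\<^sup>2 + s\<^sup>2)" using f1[of t s] by simp
  finally show ?thesis .
qed

lemma R_poly:
  fixes s t d1 C K E AV :: real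
  assumes C: "0 \<le> C" and K: "0 \<le> K" and s: "\<bar>s\<bar> \<le> 1" and t: "\<bar>t\<bar> \<le> 1"
    and E: "E \<le> AV * ((\<bar>s\<bar> + \<bar>t\<bar>) * (t\<^sup>2 + s\<^sup>2))"
  shows "4 * (E + (\<bar>t\<bar> * \<bar>s\<bar> * (d1\<^sup>2 * (C * C))) * (2 * (K * C\<^sup>2 * t\<^sup>2 + K * C\<^sup>2 * s\<^sup>2)))
     \<le> (4 * AV + 16 * (d1\<^sup>2 * C^4 * K)) * ((\<bar>s\<bar> + \<bar>t\<bar>) * (t\<^sup>2 + s\<^sup>2))"
proof -
  let ?r = "(\<bar>s\<bar> + \<bar>t\<bar>) * (t\<^sup>2 + s\<^sup>2)"
  have c: "0 \<le> d1\<^sup>2 * C^4 * K" using C K by simp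
  have e: "(\<bar>t\<bar> * \<bar>s\<bar> * (d1\<^sup>2 * (C * C))) * (2 * (K * C\<^sup>2 * t\<^sup>2 + K * C\<^sup>2 * s\<^sup>2))
      = 2 * ((d1\<^sup>2 * C^4 * K) * (\<bar>t\<bar> * \<bar>s\<bar> * t\<^sup>2)) + 2 * ((d1\<^sup>2 * C^4 * K) * (\<bar>t\<bar> * \<bar>s\<bar> * s\<^sup>2))"
    by (simp add: algebra_simps power2_eq_square eval_nat_numeral)
  have b1: "(d1\<^sup>2 * C^4 * K) * (\<bar>t\<bar> * \<bar>s\<bar> * t\<^sup>2) \<le> (d1\<^sup>2 * C^4 * K) * ?r"
    by (intro mult_left_mono f4 c t)
  have b2: "(d1\<^sup>2 * C^4 * K) * (\<bar>t\<bar> * \<bar>s\<bar> * s\<^sup>2) \<le> (d1\<^sup>2 * C^4 * K) * ?r"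
    by (intro mult_left_mono f5 c s)
  show ?thesis unfolding e using E b1 b2 by (simp add: algebra_simps)
qed

lemma R_exp:
  fixes \<phi> :: "real \<Rightarrow> real"
  assumes P0: "P0 \<in> prob_measures M" and m: "\<mu> \<in> M_P0 M P0" "\<nu> \<in> M_P0 M P0"
    and phi: "\<phi> \<in> borel_measurable (restrict_space borel {0..})" and phi1: "\<phi> 1 = 1"
    and o: "(\<lambda>y. \<phi> (1 + y) - 1 - y * d1 - y\<^sup>2 / 2 * d2) \<in> o[at 0](\<lambda>y. y\<^sup>2)"
  shows "\<exists>N. open N \<and> (0::real, 0::real) \<in> N \<and>
           (\<forall>(s,t)\<in>N. (\<lambda>b. P0 b + t * \<mu> b) \<in> prob_measures M \<and> (\<lambda>b. P0 b + s * \<nu> b) \<in> prob_measures M \<and>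
               R_phi M \<phi> P0 (\<lambda>b. P0 b + t * \<mu> b) (\<lambda>b. P0 b + s * \<nu> b) < \<infinity>) \<and>
           (\<lambda>(s,t). real_of_ereal (R_phi M \<phi> P0 (\<lambda>b. P0 b + t * \<mu> b) (\<lambda>b. P0 b + s * \<nu> b)) - t * s * (d1\<^sup>2 * inner_P0 M P0 \<mu> \<nu>))
             \<in> o[at (0,0)](\<lambda>(s,t). t\<^sup>2 + s\<^sup>2)"
proof -
  obtain d0 K C where c: "0 < d0" "0 \<le> K" "0 \<le> C"
    "\<forall>y. \<bar>y\<bar> < d0 \<longrightarrow> \<bar>\<phi> (1 + y) - 1 - d1 * y\<bar> \<le> K * y\<^sup>2"
    "AE x in to_meas M P0. \<bar>sdens M P0 \<mu> x\<bar> \<le> C" "AE x in to_meas M P0. \<bar>sdens M P0 \<nu> x\<bar> \<le> C"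
    using setup_consts[OF P0 m phi1 o] by blast
  define \<delta> where "\<delta> = min (1 / (C + 1)) (min (d0 / (C + 1)) (1 / (2 * (K + 1) * (C + 1)\<^sup>2)))"
  have \<delta>: "0 < \<delta>" unfolding \<delta>_def using c by auto
  define AV where "AV = 2 * (\<bar>d1\<bar> * C^3 * K) + 2 * (K\<^sup>2 * C^4)"
  define A where "A = 4 * AV + 16 * (d1\<^sup>2 * C^4 * K)"
  have main: "(\<lambda>b. P0 b + t * \<mu> b) \<in> prob_measures M \<and> (\<lambda>b. P0 b + s * \<nu> b) \<in> prob_measures M \<and>
      R_phi M \<phi> P0 (\<lambda>b. P0 b + t * \<mu> b) (\<lambda>b. P0 b + s * \<nu> b) < \<infinity> \<and>
      \<bar>real_of_ereal (R_phi M \<phi> P0 (\<lambda>b. P0 b + t * \<mu> b) (\<lambda>b. P0 b + s * \<nu> b)) - t * s * (d1\<^sup>2 * inner_P0 M P0 \<mu> \<nu>)\<bar>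
        \<le> A * ((\<bar>s\<bar> + \<bar>t\<bar>) * (t\<^sup>2 + s\<^sup>2))"
    if st: "\<bar>s\<bar> < \<delta>" "\<bar>t\<bar> < \<delta>" for s t
  proof -
    note ts = small_t[OF c(3) c(2) c(1) st(2)[unfolded \<delta>_def]]
    note ss = small_t[OF c(3) c(2) c(1) st(1)[unfolded \<delta>_def]]
    note E = exp_common[OF P0 m phi c(4) c(2) c(3) c(5) c(6) ts(1) ss(1) ts(2) ss(2)]
    let ?N = "to_meas M P0"
    let ?F = "phi_dens M \<phi> P0 (\<lambda>A. P0 A + t * \<mu> A)" and ?G = "phi_dens M \<phi> P0 (\<lambda>A. P0 A + s * \<nu> A)"
    let ?z = "t * s * (d1\<^sup>2 * inner_P0 M P0 \<mu> \<nu>)"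
    have eq: "(d1 * t) * (d1 * s) * inner_P0 M P0 \<mu> \<nu> = ?z"
      by (simp add: power2_eq_square algebra_simps)
    have zb: "\<bar>?z\<bar> \<le> \<bar>t\<bar> * \<bar>s\<bar> * (d1\<^sup>2 * (C * C))"
    proof -
      have zb0: "d1\<^sup>2 * \<bar>inner_P0 M P0 \<mu> \<nu>\<bar> \<le> d1\<^sup>2 * (C * C)" using E(11) by (rule mult_left_mono) simp
      have "\<bar>?z\<bar> = (\<bar>t\<bar> * \<bar>s\<bar>) * (d1\<^sup>2 * \<bar>inner_P0 M P0 \<mu> \<nu>\<bar>)" by (simp add: abs_mult)
      also have "\<dots> \<le> (\<bar>t\<bar> * \<bar>s\<bar>) * (d1\<^sup>2 * (C * C))" by (rule mult_left_mono[OF zb0]) simp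
      finally show ?thesis by simp
    qed
    note RA = R_alg[OF E(8) E(9) ts(4) ss(4) E(10)[unfolded eq] zb]
    have R: "R_phi M \<phi> P0 (\<lambda>b. P0 b + t * \<mu> b) (\<lambda>b. P0 b + s * \<nu> b) =
        ereal ((\<integral>x. ?F x * ?G x \<partial>?N) / ((\<integral>x. ?F x \<partial>?N) * (\<integral>x. ?G x \<partial>?N)) - 1)"
      unfolding R_phi_def Let_def using E(3-7) RA(1) by simp
    have VP: "\<bar>d1 * t\<bar> * C * (K * C\<^sup>2 * s\<^sup>2) + \<bar>d1 * s\<bar> * C * (K * C\<^sup>2 * t\<^sup>2) + 2 * ((K * C\<^sup>2 * t\<^sup>2) * (K * C\<^sup>2 * s\<^sup>2))
        \<le> AV * ((\<bar>s\<bar> + \<bar>t\<bar>) * (t\<^sup>2 + s\<^sup>2))"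
      unfolding AV_def by (rule V_poly[OF c(3) c(2) ss(3) ts(3) order_refl])
    have "\<bar>(\<integral>x. ?F x * ?G x \<partial>?N) / ((\<integral>x. ?F x \<partial>?N) * (\<integral>x. ?G x \<partial>?N)) - 1 - ?z\<bar>
        \<le> A * ((\<bar>s\<bar> + \<bar>t\<bar>) * (t\<^sup>2 + s\<^sup>2))"
      using RA(2) R_poly[OF c(3) c(2) ss(3) ts(3) VP, of d1] unfolding A_def by linarith
    then show ?thesis using E(1,2) R by simp
  qed
  show ?thesis
  proof (intro exI[of _ "ball (0,0) \<delta>"] conjI)
    show "open (ball (0::real, 0::real) \<delta>)" by simp
    show "(0::real, 0::real) \<in> ball (0, 0) \<delta>" using \<delta> by simp
    show "\<forall>(s, t)\<in>ball (0, 0) \<delta>. (\<lambda>b. P0 b + t * \<mu> b) \<in> prob_measures M \<and> (\<lambda>b. P0 b + s * \<nu> b) \<in> prob_measures M \<and>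
               R_phi M \<phi> P0 (\<lambda>b. P0 b + t * \<mu> b) (\<lambda>b. P0 b + s * \<nu> b) < \<infinity>"
      using main ball_small by blast
    show "(\<lambda>(s,t). real_of_ereal (R_phi M \<phi> P0 (\<lambda>b. P0 b + t * \<mu> b) (\<lambda>b. P0 b + s * \<nu> b)) - t * s * (d1\<^sup>2 * inner_P0 M P0 \<mu> \<nu>))
             \<in> o[at (0,0)](\<lambda>(s,t). t\<^sup>2 + s\<^sup>2)"
      by (rule o_crit[where A=A, OF \<delta>]) (use main in simp)
  qed
qed



lemma codiv_I:
  assumes "lin_subspace E" "X \<subseteq> E" "\<And>u. u \<in> X \<Longrightarrow> lin_subspace (Eu u)" "\<And>u. Eu u \<subseteq> E"
    "\<And>u v w. D u v w \<noteq> -\<infinity>"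
    "\<And>u v w. D u v w = D u w v"
    "\<And>u v. u \<in> X \<Longrightarrow> D u v v \<ge> 0"
    "\<And>u. u \<in> X \<Longrightarrow> D u u u = 0"
    "\<And>u. u \<in> X \<Longrightarrow> bilinear_on (Eu u) (B u)"
    "\<And>u h g. u \<in> X \<Longrightarrow> h \<in> Eu u \<Longrightarrow> g \<in> Eu u \<Longrightarrow> \<exists>N. open N \<and> (0::real, 0::real) \<in> N \<and>
           (\<forall>(s,t)\<in>N. (\<lambda>b. u b + t * h b) \<in> X \<and> (\<lambda>b. u b + s * g b) \<in> X \<and>
               D u (\<lambda>b. u b + t * h b) (\<lambda>b. u b + s * g b) < \<infinity>) \<and>
           (\<lambda>(s,t). real_of_ereal (D u (\<lambda>b. u b + t * h b) (\<lambda>b. u b + s * g b)) - t * s * B u h g)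
             \<in> o[at (0,0)](\<lambda>(s,t). t\<^sup>2 + s\<^sup>2)"
  shows "codivergence E X Eu D B"
  unfolding codivergence_def
  apply (intro conjI ballI)
           apply (rule assms(1))
          apply (rule assms(2))
         apply (erule assms(3))
        apply (rule assms(4))
       apply (rule assms(5))
      apply (rule assms(6))
     apply (erule assms(7))
    apply (erule assms(8))
   apply (erule assms(9))
  apply (erule assms(10); assumption)
  done

theorem proposition2:
  fixes M :: "'a measure" and \<phi> :: "real \<Rightarrow> real" and d1 d2 :: real
  assumes "\<forall>x\<ge>0. \<phi> x \<ge> 0"
    and "\<phi> \<in> borel_measurable (restrict_space borel {0..})"
    and "\<phi> 1 = 1"
    and "(\<lambda>y. \<phi> (1 + y) - 1 - y * d1 - y\<^sup>2 / 2 * d2) \<in> o[at 0](\<lambda>y. y\<^sup>2)"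
  shows "codivergence (fin_signed_measures M) (prob_measures M) (M_P0 M) (V_phi M \<phi>)
           (\<lambda>P0 \<mu> \<nu>. d1\<^sup>2 * inner_P0 M P0 \<mu> \<nu>)
       \<and> codivergence (fin_signed_measures M) (prob_measures M) (M_P0 M) (R_phi M \<phi>)
           (\<lambda>P0 \<mu> \<nu>. d1\<^sup>2 * inner_P0 M P0 \<mu> \<nu>)"
proof
  have sub: "prob_measures M \<subseteq> fin_signed_measures M" unfolding prob_measures_def by auto
  have sub2: "M_P0 M u \<subseteq> fin_signed_measures M" for u unfolding M_P0_def by auto
  show "codivergence (fin_signed_measures M) (prob_measures M) (M_P0 M) (V_phi M \<phi>)
           (\<lambda>P0 \<mu> \<nu>. d1\<^sup>2 * inner_P0 M P0 \<mu> \<nu>)"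
    by (rule codiv_I[OF fsm_lin sub M_P0_subspace sub2 V_not_minf V_sym V_nonneg
          V_diag[OF _ assms(3,2)] bilin V_exp[OF _ _ _ assms(2,3,4)]])
  show "codivergence (fin_signed_measures M) (prob_measures M) (M_P0 M) (R_phi M \<phi>)
           (\<lambda>P0 \<mu> \<nu>. d1\<^sup>2 * inner_P0 M P0 \<mu> \<nu>)"
    by (rule codiv_I[OF fsm_lin sub M_P0_subspace sub2 R_not_minf R_sym R_nonneg
          R_diag[OF _ assms(3,2)] bilin R_exp[OF _ _ _ assms(2,3,4)]])
qed

end
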